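(* Let $n \geq 3$ and let $\mathcal{S}=(S,\boldsymbol{\tau})$ be a species tree on $X=\{x_1,\ldots,x_n\}$. Suppose $\mathcal{S}$ contains a pendant subtree $\mathcal{S}'$ on $m$ leaves, $3 \le m \le n$, whose two maximal pendant subtrees are a subtree on the $m-1$ leaves $x_1,\ldots,x_{m-1}$ and a subtree consisting of the single leaf $x_m$. Then: (i) $FP_{\mathcal{S}}(x_m) > FP_{\mathcal{S}}(x_i)$ for all $x_i \in \{x_1,\ldots,x_{m-1}\}$; (ii) $\mathbb{E}[FP(x_m)\mid \mathcal{S}] > \mathbb{E}[FP(x_i)\mid \mathcal{S}]$ for all $x_i \in \{x_1,\ldots,x_{m-1}\}$.
   Context: A species tree $\mathcal{S}=(S,\boldsymbol{\tau})$ on $X=\{x_1,\dots,x_n\}$ consists of a rooted binary phylogenetic tree $S$ with leaf set $X$ together with a vector $\boldsymbol{\tau}=(\tau_0,\tau_1,\ldots,\tau_{n-1})$ of positive interval lengths (in coalescent units), where $\tau_0$ is the time from the leaves (time $0$) to the most recent speciation event (internal vertex), $\tau_i$ ($1\le i\le n-2$) is the time between the $i$-th and $(i+1)$-th speciation events, no two speciation events occur at the same time, and $\tau_{n-1}=\infty$ is the interval above the root. Thus $\mathcal{S}$ is ultrametric (all leaves at equal distance from the root). A vertex $v$ of a tree determines the pendant subtree rooted at $v$; the two maximal pendant subtrees of a rooted binary tree are those rooted at the two children of its root. Gene trees are generated under the multispecies coalescent on $\mathcal{S}$: one gene lineage starts at each leaf at time $0$ and lineages are traced backward in time; within each branch (population)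 of $\mathcal{S}$, any pair among the $k$ lineages present coalesces at rate $1$ (total rate $\binom{k}{2}$), lineages in sister populations enter their common ancestral population at the speciation time, and above the root all remaining lineages coalesce in a single population of infinite duration. The result is a random ultrametric rooted binary tree $h$ (a gene tree history) on leaf set $X$ with edge lengths given by the coalescent times; its expectation is taken over both the history and the coalescent times. For a rooted tree $T$ with root $\rho$, leaf set $X$ and nonnegative edge lengths $l(e)$, the Fair Proportion index is $FP_T(x_i)=\sum_{e\in P(T;\rho,x_i)} l(e)/n(e)$, where $P(T;\rho,x_i)$ is the path from $\rho$ to $x_i$ and $n(e)$ is the number of leaves descending from $e$. $FP_{\mathcal{S}}(x_i)$ denotes this index on the species tree with its branch lengths (edges above the root are excluded), and $\mathbb{E}[FP(x_i)\mid\mathcal{S}]$ denotes the expected value of $FP_h(x_i)$ for the random gene tree $h$ generated under the multispecies coalescent on $\mathcal{S}$ (edge lengths of $h$ measured in the same units, from the leaves at time $0$). *)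

theory Defs
  imports "HOL-Analysis.Analysis"
begin

text \<open>A rooted binary tree with leaf labels (natural numbers) whose internal
  vertices carry their height (time above the leaves, leaves are at time 0).
  Used both for species trees and for gene tree histories.\<close>

datatype utree = Leaf nat | Node real utree utree

fun ht :: "utree \<Rightarrow> real" where
  "ht (Leaf x) = 0"
| "ht (Node h l r) = h"

fun leaves :: "utree \<Rightarrow> nat list" where
  "leaves (Leaf x) = [x]"
| "leaves (Node h l r) = leaves l @ leaves r"

fun internal_heights :: "utree \<Rightarrow> real list" where
  "internal_heights (Leaf x) = []"
| "internal_heights (Node h l r) = h # internal_heights l @ internal_heights r"

fun heights_ok :: "utree \<Rightarrow> bool" where
  "heights_ok (Leaf x) = True"
| "heights_ok (Node h l r) = (ht l < h \<and> ht r < h \<and> heights_ok l \<and> heights_ok r)"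

fun subtrees :: "utree \<Rightarrow> utree set" where
  "subtrees (Leaf x) = {Leaf x}"
| "subtrees (Node h l r) = insert (Node h l r) (subtrees l \<union> subtrees r)"

text \<open>A species tree on X = {x_1,...,x_n} (leaf x_i labelled by i): leaves are
  distinct and exactly 1..n, interval lengths tau_i are positive (each vertex
  strictly above its children) and no two speciation events occur at the same
  time. The vector tau is determined by the (distinct, sorted) internal heights.\<close>
definition species_tree :: "nat \<Rightarrow> utree \<Rightarrow> bool" where
  "species_tree n S \<longleftrightarrow> distinct (leaves S) \<and> set (leaves S) = {1..n}
     \<and> heights_ok S \<and> distinct (internal_heights S)"

fun fp :: "utree \<Rightarrow> nat \<Rightarrow> real" where
  "fp (Leaf y) x = 0"
| "fp (Node h l r) x =
     (if x \<in> set (leaves l) then (h - ht l) / real (length (leaves l)) + fp l x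
      else if x \<in> set (leaves r) then (h - ht r) / real (length (leaves r)) + fp r x
      else 0)"

definition merge_pair :: "real \<Rightarrow> nat \<times> nat \<Rightarrow> utree list \<Rightarrow> utree list" where
  "merge_pair t p ls = Node t (ls ! fst p) (ls ! snd p)
      # [ls ! q. q \<leftarrow> [0..<length ls], q \<noteq> fst p \<and> q \<noteq> snd p]"

definition pairs :: "nat \<Rightarrow> (nat \<times> nat) set" where
  "pairs k = {(i, j). i < j \<and> j < k}"

text \<open>coal k a b cont ls: expectation of the continuation cont applied to the
  lineages leaving a population that spans the time interval from a to b
  (b = \<infinity> for the root population), entered at time a by the lineages ls
  (k = length ls is the recursion fuel). With k lineages, the first coalescence
  happens after an Exp(k choose 2) waiting time t, a uniformly random pair
  coalesces at time a+t; if no coalescence happens before b, the lineages leave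
  the population unchanged.\<close>
primrec coal :: "nat \<Rightarrow> real \<Rightarrow> ereal \<Rightarrow> (utree list \<Rightarrow> ennreal) \<Rightarrow> utree list \<Rightarrow> ennreal" where
  "coal 0 a b cont ls = cont ls"
| "coal (Suc k) a b cont ls =
     (if length ls \<le> 1 then cont ls
      else
        (let lam = real (length ls * (length ls - 1)) / 2;
             P = pairs (length ls)
         in (\<integral>\<^sup>+ t. indicator {t. 0 < t \<and> ereal (a + t) < b} t
                  * ennreal (lam * exp (- lam * t))
                  * (\<Sum>p\<in>P. ennreal (1 / real (card P)) * coal k (a + t) b cont (merge_pair (a + t) p ls))
               \<partial>lborel)
            + ennreal (if b = \<infinity> then 0 else exp (- lam * (real_of_ereal b - a))) * cont ls))"

text \<open>mscE S tp cont: expectation of cont applied to the gene lineages present at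
  time tp at the top of the branch above the species (sub)tree S, where the
  process inside S and along that branch follows the multispecies coalescent.
  Sister populations evolve independently (nested expectations).\<close>
primrec mscE :: "utree \<Rightarrow> ereal \<Rightarrow> (utree list \<Rightarrow> ennreal) \<Rightarrow> ennreal" where
  "mscE (Leaf x) tp cont = coal 1 0 tp cont [Leaf x]"
| "mscE (Node h l r) tp cont =
     mscE l (ereal h) (\<lambda>ls1. mscE r (ereal h) (\<lambda>ls2.
        coal (length (ls1 @ ls2)) h tp cont (ls1 @ ls2)))"

definition expected_fp :: "utree \<Rightarrow> nat \<Rightarrow> ennreal" where
  "expected_fp S x = mscE S \<infinity> (\<lambda>ls. ennreal (fp (hd ls) x))"

end

theory Submission
  imports Defs "HOL-Real_Asymp.Real_Asymp"
begin

fun hok :: "utree \<Rightarrow> bool" where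
  "hok (Leaf x) = True"
| "hok (Node t l r) = (ht l \<le> t \<and> ht r \<le> t \<and> hok l \<and> hok r)"

definition lvs :: "utree list \<Rightarrow> nat list" where
  "lvs ls = concat (map leaves ls)"

lemma lvs_simps[simp]: "lvs [] = []" "lvs (x # xs) = leaves x @ lvs xs"
  "lvs (xs @ ys) = lvs xs @ lvs ys"
  by (auto simp: lvs_def)

lemma leaves_ne[simp]: "leaves T \<noteq> []"
  by (induction T) auto

lemma length_leaves_pos: "0 < length (leaves T)"
  using leaves_ne[of T] by (simp del: leaves_ne)

lemma heights_ok_hok: "heights_ok T \<Longrightarrow> hok T"
  by (induction T) auto

lemma hok_ht_nonneg: "hok T \<Longrightarrow> 0 \<le> ht T"
  by (induction T) auto

lemma fp_not_in: "x \<notin> set (leaves T) \<Longrightarrow> fp T x = 0"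
  by (induction T) auto

lemma div_le_self_real: "0 \<le> d \<Longrightarrow> 1 \<le> s \<Longrightarrow> d / s \<le> (d::real)"
  using frac_le[of d d 1 s] by simp

lemma fp_le_ht: "hok T \<Longrightarrow> fp T x \<le> ht T"
proof (induction T)
  case (Leaf y) then show ?case by simp
next
  case (Node t l r)
  have pl: "1 \<le> real (length (leaves l))" "1 \<le> real (length (leaves r))"
    using length_leaves_pos[of l] length_leaves_pos[of r] by linarith+
  have "(t - ht l) / real (length (leaves l)) \<le> t - ht l"
    using Node pl by (intro div_le_self_real) auto
  moreover have "(t - ht r) / real (length (leaves r)) \<le> t - ht r"
    using Node pl by (intro div_le_self_real) auto
  ultimately show ?case using Node hok_ht_nonneg[of l] hok_ht_nonneg[of r] by auto
qed

lemma fp_nonneg: "hok T \<Longrightarrow> 0 \<le> fp T x"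
  by (induction T) auto

lemma subtrees_self[simp]: "T \<in> subtrees T"
  by (cases T) auto

lemma subtrees_leaves: "T \<in> subtrees S \<Longrightarrow> set (leaves T) \<subseteq> set (leaves S)"
  by (induction S) auto

lemma subtrees_heights_ok: "T \<in> subtrees S \<Longrightarrow> heights_ok S \<Longrightarrow> heights_ok T"
  by (induction S) auto

lemma subtrees_distinct: "T \<in> subtrees S \<Longrightarrow> distinct (leaves S) \<Longrightarrow> distinct (leaves T)"
  by (induction S) auto

lemma subtrees_Leaf: "T \<in> subtrees (Leaf x) \<longleftrightarrow> T = Leaf x"
  by simp

lemma fp_sub:
  "distinct (leaves S) \<Longrightarrow> T \<in> subtrees S \<Longrightarrow> x \<in> set (leaves T) \<Longrightarrow> y \<in> set (leaves T)
   \<Longrightarrow> fp S x - fp S y = fp T x - fp T y"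
proof (induction S)
  case (Leaf z) then show ?case by simp
next
  case (Node t l r)
  show ?case
  proof (cases "T = Node t l r")
    case True then show ?thesis by simp
  next
    case False
    then have "T \<in> subtrees l \<or> T \<in> subtrees r" using Node.prems by auto
    then show ?thesis
    proof
      assume T: "T \<in> subtrees l"
      then have "x \<in> set (leaves l)" "y \<in> set (leaves l)"
        using subtrees_leaves[OF T] Node.prems by auto
      then show ?thesis using Node.IH(1)[OF _ T] Node.prems by auto
    next
      assume T: "T \<in> subtrees r"
      then have "x \<in> set (leaves r)" "y \<in> set (leaves r)"
        using subtrees_leaves[OF T] Node.prems by auto
      moreover have "x \<notin> set (leaves l)" "y \<notin> set (leaves l)"
        using calculation Node.prems(1) by auto
      ultimately show ?thesis using Node.IH(2)[OF _ T] Node.prems by auto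
    qed
  qed
qed

lemma part1_core:
  assumes hA: "heights_ok A" "ht A < h" "distinct (leaves A)" "2 \<le> length (leaves A)"
    and i: "i \<in> set (leaves A)" and mA: "m \<notin> set (leaves A)"
  shows "fp (Node h A (Leaf m)) i < fp (Node h A (Leaf m)) m"
    "fp (Node h (Leaf m) A) i < fp (Node h (Leaf m) A) m"
proof -
  have im: "i \<noteq> m" using i mA by auto
  have f: "fp A i \<le> ht A" using fp_le_ht heights_ok_hok hA by blast
  have s: "2 \<le> real (length (leaves A))" using hA by linarith
  have "(h - ht A) / real (length (leaves A)) \<le> (h - ht A) / 2"
    using hA s by (intro divide_left_mono) auto
  moreover have "(h - ht A) / 2 + ht A < h" using hA(2) by (simp add: field_simps)
  ultimately have *: "(h - ht A) / real (length (leaves A)) + fp A i < h" using f by linarith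
  show "fp (Node h A (Leaf m)) i < fp (Node h A (Leaf m)) m"
    using * i mA im by simp
  show "fp (Node h (Leaf m) A) i < fp (Node h (Leaf m) A) m"
    using * i mA im by simp
qed

lemma part1:
  assumes "species_tree n S" "3 \<le> m"
    and S': "Node h A (Leaf m) \<in> subtrees S \<or> Node h (Leaf m) A \<in> subtrees S"
    and A: "set (leaves A) = {1..<m}" and i: "i \<in> {1..<m}"
  shows "fp S i < fp S m"
proof -
  have dS: "distinct (leaves S)" and hS: "heights_ok S" using assms(1) by (auto simp: species_tree_def)
  from S' obtain S0 where S0: "S0 \<in> subtrees S" and
    S0c: "S0 = Node h A (Leaf m) \<or> S0 = Node h (Leaf m) A" by blast
  have hS0: "heights_ok S0" using subtrees_heights_ok[OF S0 hS] .
  have dS0: "distinct (leaves S0)" using subtrees_distinct[OF S0 dS] .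
  have hA: "heights_ok A" "ht A < h" "distinct (leaves A)" using hS0 dS0 S0c by auto
  have "length (leaves A) = card {1..<m}" using hA(3) A distinct_card by metis
  then have lA: "2 \<le> length (leaves A)" using assms(2) by simp
  have iA: "i \<in> set (leaves A)" and mA: "m \<notin> set (leaves A)" using A i by auto
  have "fp S m - fp S i = fp S0 m - fp S0 i"
    using fp_sub[OF dS S0] S0c iA by auto
  moreover have "fp S0 i < fp S0 m" using part1_core[OF hA lA iA mA] S0c by auto
  ultimately show ?thesis by linarith
qed

definition lamf :: "nat \<Rightarrow> real" where "lamf n = real (n * (n - 1)) / 2"

lemma pairs_finite[simp]: "finite (pairs n)"
  by (rule finite_subset[of _ "{..<n} \<times> {..<n}"]) (auto simp: pairs_def)

lemma pairs_mem: "p \<in> pairs n \<Longrightarrow> fst p < snd p \<and> snd p < n"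
  by (auto simp: pairs_def)

lemma pairs_01: "2 \<le> n \<Longrightarrow> (0, 1) \<in> pairs n"
  by (auto simp: pairs_def)

lemma pairs_card_pos: "2 \<le> n \<Longrightarrow> 0 < card (pairs n)"
  using pairs_01 card_gt_0_iff by fastforce

lemma pairs_card_le: "card (pairs n) \<le> n * n"
proof -
  have "card (pairs n) \<le> card ({..<n} \<times> {..<n})"
    by (rule card_mono) (auto simp: pairs_def)
  then show ?thesis by (simp add: card_cartesian_product)
qed

lemma concat_map_if: "concat (map (\<lambda>q. if P q then [f q] else []) xs) = map f (filter P xs)"
  by (induction xs) auto

lemma merge_pair_alt: "merge_pair t (u, v) ls =
   Node t (ls ! u) (ls ! v) # map (nth ls) (filter (\<lambda>q. q \<noteq> u \<and> q \<noteq> v) [0..<length ls])"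
  by (simp add: merge_pair_def concat_map_if)

lemma mset_rest:
  assumes "u < v" "v < length ls"
  shows "mset (map (nth ls) (filter (\<lambda>q. q \<noteq> u \<and> q \<noteq> v) [0..<length ls])) + {#ls ! u, ls ! v#} = mset ls"
proof -
  let ?n = "length ls"
  let ?P = "\<lambda>q. q \<noteq> u \<and> q \<noteq> v"
  have "mset [0..<?n] = filter_mset ?P (mset [0..<?n]) + filter_mset (\<lambda>q. \<not> ?P q) (mset [0..<?n])"
    by (rule multiset_partition)
  moreover have "filter_mset (\<lambda>q. \<not> ?P q) (mset [0..<?n]) = {#u, v#}"
  proof -
    have "filter_mset (\<lambda>q. \<not> ?P q) (mset [0..<?n]) = mset (filter (\<lambda>q. \<not> ?P q) [0..<?n])"
      by (simp add: mset_filter)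
    also have "filter (\<lambda>q. \<not> ?P q) [0..<?n] = filter (\<lambda>q. q = u \<or> q = v) [0..<?n]"
      by (rule filter_cong) auto
    also have "mset \<dots> = mset_set (set (filter (\<lambda>q. q = u \<or> q = v) [0..<?n]))"
      by (simp add: mset_set_set[symmetric] del: mset_set_set)
    also have "set (filter (\<lambda>q. q = u \<or> q = v) [0..<?n]) = {u, v}" using assms by auto
    also have "mset_set {u, v} = {#u, v#}" using assms by simp
    finally show ?thesis .
  qed
  ultimately have "mset [0..<?n] = mset (filter ?P [0..<?n]) + {#u, v#}"
    by (metis mset_filter)
  then have "image_mset (nth ls) (mset [0..<?n]) = image_mset (nth ls) (mset (filter ?P [0..<?n])) + {#ls ! u, ls ! v#}"
    by simp
  moreover have "image_mset (nth ls) (mset [0..<?n]) = mset ls"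
    by (metis map_nth mset_map)
  ultimately show ?thesis by (simp add: mset_map)
qed

lemma mset_merge:
  assumes "p \<in> pairs (length ls)"
  shows "mset (merge_pair t p ls) = add_mset (Node t (ls ! fst p) (ls ! snd p)) (mset ls - {#ls ! fst p, ls ! snd p#})"
proof -
  obtain u v where p: "p = (u, v)" by (cases p)
  have uv: "u < v" "v < length ls" using pairs_mem[OF assms] p by auto
  show ?thesis using mset_rest[OF uv] unfolding p merge_pair_alt
    by (metis add_diff_cancel_right' fst_conv mset.simps(2) snd_conv)
qed

lemma mset_merge_sub:
  assumes "p \<in> pairs (length ls)"
  shows "{#ls ! fst p, ls ! snd p#} \<subseteq># mset ls"
proof -
  obtain u v where p: "p = (u, v)" by (cases p)
  have uv: "u < v" "v < length ls" using pairs_mem[OF assms] p by auto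
  show ?thesis using mset_rest[OF uv] p by (metis fst_conv mset_subset_eq_add_right snd_conv)
qed

lemma length_merge:
  assumes "p \<in> pairs (length ls)"
  shows "length (merge_pair t p ls) = length ls - 1"
proof -
  have "size (mset (merge_pair t p ls)) = Suc (size (mset ls - {#ls ! fst p, ls ! snd p#}))"
    using mset_merge[OF assms] by simp
  also have "size (mset ls - {#ls ! fst p, ls ! snd p#}) = size (mset ls) - 2"
    using mset_merge_sub[OF assms] by (simp add: size_Diff_submset)
  moreover have "2 \<le> length ls" using pairs_mem[OF assms] by linarith
  ultimately show ?thesis by simp
qed

lemma set_merge:
  assumes "p \<in> pairs (length ls)" "Y \<in> set (merge_pair t p ls)"
  shows "Y = Node t (ls ! fst p) (ls ! snd p) \<or> Y \<in> set ls"
  using assms mset_merge[OF assms(1)] 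
  by (metis in_diffD insert_DiffM2 set_mset_add_mset_insert insert_iff set_mset_mset)

lemma set_merge2:
  assumes "p \<in> pairs (length ls)" "Y \<in> set ls" "Y \<noteq> ls ! fst p" "Y \<noteq> ls ! snd p"
  shows "Y \<in> set (merge_pair t p ls)"
proof -
  have "Y \<in># mset ls - {#ls ! fst p, ls ! snd p#}"
    using assms(2-4) by (simp add: in_diff_count)
  then show ?thesis using mset_merge[OF assms(1)] by (metis set_mset_mset union_iff add_mset_add_single)
qed

lemma mset_lvs: "mset (lvs ls) = sum_mset (image_mset (\<lambda>T. mset (leaves T)) (mset ls))"
  by (induction ls) auto

lemma mset_lvs_merge:
  assumes "p \<in> pairs (length ls)"
  shows "mset (lvs (merge_pair t p ls)) = mset (lvs ls)"
proof -
  let ?R = "mset ls - {#ls ! fst p, ls ! snd p#}"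
  have e: "mset ls = ?R + {#ls ! fst p, ls ! snd p#}"
    using mset_merge_sub[OF assms] by (metis subset_mset.diff_add)
  show ?thesis
    unfolding mset_lvs mset_merge[OF assms]
    by (subst (2) e) (simp add: ac_simps)
qed

lemma set_lvs_merge:
  assumes "p \<in> pairs (length ls)"
  shows "set (lvs (merge_pair t p ls)) = set (lvs ls)"
  using mset_lvs_merge[OF assms] by (metis set_mset_mset)

lemma distinct_lvs_merge:
  assumes "p \<in> pairs (length ls)"
  shows "distinct (lvs (merge_pair t p ls)) = distinct (lvs ls)"
  using mset_lvs_merge[OF assms] by (metis mset_eq_imp_distinct_iff)

lemma length_le_lvs: "length ls \<le> length (lvs ls)"
proof (induction ls)
  case (Cons x xs)
  have e: "length (lvs (x # xs)) = length (leaves x) + length (lvs xs)" by simp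
  have e2: "length (x # xs) = Suc (length xs)" by simp
  show ?case using Cons.IH length_leaves_pos[of x] unfolding e e2 by linarith
qed simp

lemma leaves_sub_lvs: "Y \<in> set ls \<Longrightarrow> set (leaves Y) \<subseteq> set (lvs ls)"
  by (auto simp: lvs_def)

lemma lvs_disjoint:
  assumes "distinct (lvs ls)" "u < length ls" "v < length ls" "u \<noteq> v"
  shows "set (leaves (ls ! u)) \<inter> set (leaves (ls ! v)) = {}"
  using assms
proof (induction ls arbitrary: u v)
  case Nil then show ?case by simp
next
  case (Cons x xs)
  show ?case
  proof (cases u)
    case 0
    then obtain v' where v': "v = Suc v'" using Cons by (cases v) auto
    then have "xs ! v' \<in> set xs" using Cons by simp
    then have "set (leaves (xs ! v')) \<subseteq> set (lvs xs)" by (rule leaves_sub_lvs)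
    moreover have "set (leaves x) \<inter> set (lvs xs) = {}" using Cons.prems(1) by simp
    ultimately show ?thesis using 0 v' by auto
  next
    case (Suc u')
    show ?thesis
    proof (cases v)
      case 0
      then have "xs ! u' \<in> set xs" using Cons Suc by simp
      then have "set (leaves (xs ! u')) \<subseteq> set (lvs xs)" by (rule leaves_sub_lvs)
      moreover have "set (leaves x) \<inter> set (lvs xs) = {}" using Cons.prems(1) by simp
      ultimately show ?thesis using 0 Suc by auto
    next
      case (Suc v') then show ?thesis using Cons \<open>u = Suc u'\<close> by auto
    qed
  qed
qed


lemma coal_le1: "length ls \<le> 1 \<Longrightarrow> coal k a b cont ls = cont ls"
  by (cases k) auto

lemma coal_Suc_ge2:
  assumes "2 \<le> length ls"
  shows "coal (Suc k) a b cont ls =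
   (\<integral>\<^sup>+ t. indicator {t. 0 < t \<and> ereal (a + t) < b} t * ennreal (lamf (length ls) * exp (- lamf (length ls) * t))
      * (\<Sum>p\<in>pairs (length ls). ennreal (1 / real (card (pairs (length ls)))) * coal k (a + t) b cont (merge_pair (a + t) p ls)) \<partial>lborel)
   + ennreal (if b = \<infinity> then 0 else exp (- lamf (length ls) * (real_of_ereal b - a))) * cont ls"
  using assms by (simp add: Let_def lamf_def)

lemma mscE_Leaf: "mscE (Leaf x) tp cont = cont [Leaf x]"
  by (simp add: coal_le1)

lemma coal_mono:
  assumes "\<And>ls. c2 ls \<le> c1 ls"
  shows "coal k a b c2 ls \<le> coal k a b c1 ls"
proof (induction k arbitrary: a ls)
  case 0 then show ?case using assms by simp
next
  case (Suc k)
  show ?case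
  proof (cases "length ls \<le> 1")
    case True then show ?thesis using assms by (simp add: coal_le1)
  next
    case False
    then have "2 \<le> length ls" by simp
    then show ?thesis unfolding coal_Suc_ge2[OF \<open>2 \<le> length ls\<close>]
      by (intro add_mono nn_integral_mono mult_left_mono sum_mono Suc assms) auto
  qed
qed

lemma coal_sim:
  fixes R :: "real \<Rightarrow> utree list \<Rightarrow> utree list \<Rightarrow> bool"
  assumes "R a xs ys" "length xs \<le> k"
    and len: "\<And>a xs ys. R a xs ys \<Longrightarrow> length ys = length xs"
    and step: "\<And>a xs ys t. R a xs ys \<Longrightarrow> 0 < t \<Longrightarrow> ereal (a + t) < b \<Longrightarrow> 2 \<le> length xs \<Longrightarrow>
       \<exists>\<sigma>. bij_betw \<sigma> (pairs (length xs)) (pairs (length xs)) \<and>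
          (\<forall>p\<in>pairs (length xs). R (a + t) (merge_pair (a + t) p xs) (merge_pair (a + t) (\<sigma> p) ys))"
    and ex: "\<And>a xs ys. R a xs ys \<Longrightarrow> length xs \<le> 1 \<or> b \<noteq> \<infinity> \<Longrightarrow> c2 ys \<le> c1 xs"
  shows "coal k a b c2 ys \<le> coal k a b c1 xs"
  using assms(1,2)
proof (induction k arbitrary: a xs ys)
  case 0 then show ?case using ex len by simp
next
  case (Suc k)
  have ly: "length ys = length xs" using len Suc.prems by blast
  show ?case
  proof (cases "length xs \<le> 1")
    case True then show ?thesis using ex[OF Suc.prems(1)] ly by (simp add: coal_le1)
  next
    case False
    then have l2: "2 \<le> length xs" by simp
    let ?n = "length xs"
    let ?w = "ennreal (1 / real (card (pairs ?n)))"
    have int: "(\<Sum>p\<in>pairs ?n. ?w * coal k (a + t) b c2 (merge_pair (a + t) p ys))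
        \<le> (\<Sum>p\<in>pairs ?n. ?w * coal k (a + t) b c1 (merge_pair (a + t) p xs))"
      if t: "0 < t" "ereal (a + t) < b" for t
    proof -
      obtain \<sigma> where \<sigma>: "bij_betw \<sigma> (pairs ?n) (pairs ?n)"
        "\<forall>p\<in>pairs ?n. R (a + t) (merge_pair (a + t) p xs) (merge_pair (a + t) (\<sigma> p) ys)"
        using step[OF Suc.prems(1) t l2] by blast
      have "(\<Sum>p\<in>pairs ?n. ?w * coal k (a + t) b c2 (merge_pair (a + t) p ys))
          = (\<Sum>p\<in>pairs ?n. ?w * coal k (a + t) b c2 (merge_pair (a + t) (\<sigma> p) ys))"
        using sum.reindex_bij_betw[OF \<sigma>(1), of "\<lambda>p. ?w * coal k (a + t) b c2 (merge_pair (a + t) p ys)"]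
        by simp
      also have "\<dots> \<le> (\<Sum>p\<in>pairs ?n. ?w * coal k (a + t) b c1 (merge_pair (a + t) p xs))"
      proof (intro sum_mono mult_left_mono)
        fix p assume p: "p \<in> pairs ?n"
        have "length (merge_pair (a + t) p xs) \<le> k"
          using length_merge[OF p] Suc.prems(2) by simp
        then show "coal k (a + t) b c2 (merge_pair (a + t) (\<sigma> p) ys) \<le> coal k (a + t) b c1 (merge_pair (a + t) p xs)"
          using Suc.IH \<sigma>(2) p by blast
      qed auto
      finally show ?thesis .
    qed
    have "coal (Suc k) a b c2 ys \<le> coal (Suc k) a b c1 xs"
      unfolding coal_Suc_ge2[OF l2] coal_Suc_ge2[OF l2[folded ly]] ly
    proof (intro add_mono nn_integral_mono)
      fix t :: real
      show "indicator {t. 0 < t \<and> ereal (a + t) < b} t * ennreal (lamf ?n * exp (- lamf ?n * t)) *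
          (\<Sum>p\<in>pairs ?n. ?w * coal k (a + t) b c2 (merge_pair (a + t) p ys))
        \<le> indicator {t. 0 < t \<and> ereal (a + t) < b} t * ennreal (lamf ?n * exp (- lamf ?n * t)) *
          (\<Sum>p\<in>pairs ?n. ?w * coal k (a + t) b c1 (merge_pair (a + t) p xs))"
        using int by (cases "0 < t \<and> ereal (a + t) < b") (auto intro!: mult_left_mono)
    next
      show "ennreal (if b = \<infinity> then 0 else exp (- lamf ?n * (real_of_ereal b - a))) * c2 ys
        \<le> ennreal (if b = \<infinity> then 0 else exp (- lamf ?n * (real_of_ereal b - a))) * c1 xs"
        using ex[OF Suc.prems(1)] by (cases "b = \<infinity>") (auto intro!: mult_left_mono)
    qed
    then show ?thesis .
  qed
qed

lemma nn_integral_superadd: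
  "integral\<^sup>N M f + integral\<^sup>N M g \<le> (\<integral>\<^sup>+ x. f x + g x \<partial>M)"
proof -
  define A where "A = {s. simple_function M s \<and> s \<le> f}"
  define B where "B = {s. simple_function M s \<and> s \<le> g}"
  have ne: "A \<noteq> {}" "B \<noteq> {}"
    unfolding A_def B_def by (auto intro!: exI[of _ "\<lambda>_. 0"] simp: le_fun_def)
  have key: "integral\<^sup>S M s + integral\<^sup>S M s' \<le> (\<integral>\<^sup>+ x. f x + g x \<partial>M)"
    if "s \<in> A" "s' \<in> B" for s s'
  proof -
    have s: "simple_function M s" "s \<le> f" and s': "simple_function M s'" "s' \<le> g"
      using that by (auto simp: A_def B_def)
    have "integral\<^sup>S M s + integral\<^sup>S M s' = integral\<^sup>S M (\<lambda>x. s x + s' x)"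
      using s s' by simp
    also have "\<dots> = integral\<^sup>N M (\<lambda>x. s x + s' x)"
      using s s' by (simp add: nn_integral_eq_simple_integral)
    also have "\<dots> \<le> (\<integral>\<^sup>+ x. f x + g x \<partial>M)"
      using s s' by (intro nn_integral_mono add_mono) (auto simp: le_fun_def)
    finally show ?thesis .
  qed
  have "integral\<^sup>N M f + integral\<^sup>N M g = (SUP s'\<in>B. SUP s\<in>A. integral\<^sup>S M s + integral\<^sup>S M s')"
    unfolding nn_integral_def[of M f] nn_integral_def[of M g] A_def[symmetric] B_def[symmetric]
    by (simp add: ennreal_SUP_add_left[symmetric, OF ne(1)] ennreal_SUP_add_right[OF ne(2)])
  also have "\<dots> \<le> (\<integral>\<^sup>+ x. f x + g x \<partial>M)"
    using key by (intro SUP_least) auto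
  finally show ?thesis .
qed

lemma coal_superadd:
  "coal k a b c1 ls + coal k a b c2 ls \<le> coal k a b (\<lambda>x. c1 x + c2 x) ls"
proof (induction k arbitrary: a ls)
  case 0 then show ?case by simp
next
  case (Suc k)
  show ?case
  proof (cases "length ls \<le> 1")
    case True then show ?thesis by (simp add: coal_le1)
  next
    case False
    then have l2: "2 \<le> length ls" by simp
    let ?n = "length ls"
    let ?w = "ennreal (1 / real (card (pairs ?n)))"
    let ?I = "\<lambda>t. indicator {t. 0 < t \<and> ereal (a + t) < b} t * ennreal (lamf ?n * exp (- lamf ?n * t))"
    let ?e = "ennreal (if b = \<infinity> then 0 else exp (- lamf ?n * (real_of_ereal b - a)))"
    have "(\<integral>\<^sup>+ t. ?I t * (\<Sum>p\<in>pairs ?n. ?w * coal k (a + t) b c1 (merge_pair (a + t) p ls)) \<partial>lborel)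
        + (\<integral>\<^sup>+ t. ?I t * (\<Sum>p\<in>pairs ?n. ?w * coal k (a + t) b c2 (merge_pair (a + t) p ls)) \<partial>lborel)
      \<le> (\<integral>\<^sup>+ t. ?I t * (\<Sum>p\<in>pairs ?n. ?w * coal k (a + t) b c1 (merge_pair (a + t) p ls))
          + ?I t * (\<Sum>p\<in>pairs ?n. ?w * coal k (a + t) b c2 (merge_pair (a + t) p ls)) \<partial>lborel)"
      by (rule nn_integral_superadd)
    also have "\<dots> \<le> (\<integral>\<^sup>+ t. ?I t * (\<Sum>p\<in>pairs ?n. ?w * coal k (a + t) b (\<lambda>x. c1 x + c2 x) (merge_pair (a + t) p ls)) \<partial>lborel)"
    proof (intro nn_integral_mono)
      fix t
      have "?I t * (\<Sum>p\<in>pairs ?n. ?w * coal k (a + t) b c1 (merge_pair (a + t) p ls))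
          + ?I t * (\<Sum>p\<in>pairs ?n. ?w * coal k (a + t) b c2 (merge_pair (a + t) p ls))
        = ?I t * (\<Sum>p\<in>pairs ?n. ?w * (coal k (a + t) b c1 (merge_pair (a + t) p ls) + coal k (a + t) b c2 (merge_pair (a + t) p ls)))"
        by (simp add: distrib_left sum.distrib)
      also have "\<dots> \<le> ?I t * (\<Sum>p\<in>pairs ?n. ?w * coal k (a + t) b (\<lambda>x. c1 x + c2 x) (merge_pair (a + t) p ls))"
        by (intro mult_left_mono sum_mono Suc.IH) auto
      finally show "?I t * (\<Sum>p\<in>pairs ?n. ?w * coal k (a + t) b c1 (merge_pair (a + t) p ls))
          + ?I t * (\<Sum>p\<in>pairs ?n. ?w * coal k (a + t) b c2 (merge_pair (a + t) p ls))
        \<le> ?I t * (\<Sum>p\<in>pairs ?n. ?w * coal k (a + t) b (\<lambda>x. c1 x + c2 x) (merge_pair (a + t) p ls))" .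
    qed
    finally have *: "(\<integral>\<^sup>+ t. ?I t * (\<Sum>p\<in>pairs ?n. ?w * coal k (a + t) b c1 (merge_pair (a + t) p ls)) \<partial>lborel)
        + (\<integral>\<^sup>+ t. ?I t * (\<Sum>p\<in>pairs ?n. ?w * coal k (a + t) b c2 (merge_pair (a + t) p ls)) \<partial>lborel)
      \<le> (\<integral>\<^sup>+ t. ?I t * (\<Sum>p\<in>pairs ?n. ?w * coal k (a + t) b (\<lambda>x. c1 x + c2 x) (merge_pair (a + t) p ls)) \<partial>lborel)" .
    have **: "?e * c1 ls + ?e * c2 ls = ?e * (c1 ls + c2 ls)" by (simp add: distrib_left)
    let ?J = "\<lambda>c. (\<integral>\<^sup>+ t. ?I t * (\<Sum>p\<in>pairs ?n. ?w * coal k (a + t) b c (merge_pair (a + t) p ls)) \<partial>lborel)"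
    have "coal (Suc k) a b c1 ls + coal (Suc k) a b c2 ls = (?J c1 + ?J c2) + (?e * c1 ls + ?e * c2 ls)"
      unfolding coal_Suc_ge2[OF l2] by (simp only: ac_simps)
    also have "\<dots> \<le> ?J (\<lambda>x. c1 x + c2 x) + ?e * (c1 ls + c2 ls)"
      using * ** by (intro add_mono) auto
    also have "\<dots> = coal (Suc k) a b (\<lambda>x. c1 x + c2 x) ls"
      unfolding coal_Suc_ge2[OF l2] by simp
    finally show ?thesis .
  qed
qed

lemma mscE_mono:
  assumes "\<And>ls. c2 ls \<le> c1 ls"
  shows "mscE T tp c2 \<le> mscE T tp c1"
  using assms
proof (induction T arbitrary: tp c1 c2)
  case (Leaf x) then show ?case by (simp add: mscE_Leaf)
next
  case (Node h l r)
  show ?case unfolding mscE.simps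
    by (intro Node.IH coal_mono Node.prems)
qed

lemma mscE_superadd:
  "mscE T tp c1 + mscE T tp c2 \<le> mscE T tp (\<lambda>x. c1 x + c2 x)"
proof (induction T arbitrary: tp c1 c2)
  case (Leaf x) then show ?case by (simp add: mscE_Leaf)
next
  case (Node h l r)
  let ?f = "\<lambda>c ls1. mscE r (ereal h) (\<lambda>ls2. coal (length (ls1 @ ls2)) h tp c (ls1 @ ls2))"
  have "mscE l (ereal h) (?f c1) + mscE l (ereal h) (?f c2) \<le> mscE l (ereal h) (\<lambda>x. ?f c1 x + ?f c2 x)"
    by (rule Node.IH(1))
  also have "\<dots> \<le> mscE l (ereal h) (\<lambda>ls1. mscE r (ereal h) (\<lambda>ls2. coal (length (ls1 @ ls2)) h tp c1 (ls1 @ ls2)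
       + coal (length (ls1 @ ls2)) h tp c2 (ls1 @ ls2)))"
    by (intro mscE_mono Node.IH(2))
  also have "\<dots> \<le> mscE l (ereal h) (?f (\<lambda>x. c1 x + c2 x))"
    by (intro mscE_mono coal_superadd)
  finally show ?case by simp
qed

definition CI :: "nat multiset \<Rightarrow> real \<Rightarrow> utree list \<Rightarrow> bool" where
  "CI M a ls \<longleftrightarrow> (\<forall>Y\<in>set ls. hok Y \<and> ht Y \<le> a) \<and> mset (lvs ls) = M"

definition gd :: "utree \<Rightarrow> ereal \<Rightarrow> utree list \<Rightarrow> bool" where
  "gd T tp ls \<longleftrightarrow> (\<forall>Y\<in>set ls. hok Y \<and> ereal (ht Y) < tp) \<and> mset (lvs ls) = mset (leaves T)"

lemma merge_hok:
  assumes "\<forall>Y\<in>set ls. hok Y \<and> ht Y \<le> a" "0 < t" "p \<in> pairs (length ls)"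
  shows "\<forall>Y\<in>set (merge_pair (a + t) p ls). hok Y \<and> ht Y \<le> a + t"
proof
  fix Y assume Y: "Y \<in> set (merge_pair (a + t) p ls)"
  have "fst p < length ls" "snd p < length ls" using pairs_mem[OF assms(3)] by auto
  then have "ls ! fst p \<in> set ls" "ls ! snd p \<in> set ls" by auto
  then show "hok Y \<and> ht Y \<le> a + t"
    using set_merge[OF assms(3) Y] assms(1,2) by fastforce
qed

lemma CI_merge:
  assumes "CI M a ls" "0 < t" "p \<in> pairs (length ls)"
  shows "CI M (a + t) (merge_pair (a + t) p ls)"
  using assms merge_hok[of ls a t p] mset_lvs_merge[OF assms(3)] by (auto simp: CI_def)

lemma mset_lvs_length: "mset (lvs ls) = M \<Longrightarrow> length ls \<le> size M"
  using length_le_lvs[of ls] by (metis size_mset)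

lemma gd_ne: "gd T tp ls \<Longrightarrow> ls \<noteq> []"
  unfolding gd_def using leaves_ne[of T] by (metis lvs_simps(1) mset_zero_iff_right)

lemma mscE_mono_gd:
  assumes "heights_ok T" "ereal (ht T) < tp" "\<And>ls. gd T tp ls \<Longrightarrow> c2 ls \<le> c1 ls"
  shows "mscE T tp c2 \<le> mscE T tp c1"
  using assms
proof (induction T arbitrary: tp c1 c2)
  case (Leaf x)
  have "gd (Leaf x) tp [Leaf x]" using Leaf.prems(2) by (simp add: gd_def)
  then show ?case using Leaf.prems(3) by (simp add: mscE_Leaf)
next
  case (Node h l r)
  have hl: "heights_ok l" "ht l < h" "heights_ok r" "ht r < h" using Node.prems(1) by auto
  have htp: "ereal h < tp" using Node.prems(2) by simp
  let ?M = "mset (leaves (Node h l r))"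
  show ?case unfolding mscE.simps
  proof (rule Node.IH(1))
    fix ls1 assume g1: "gd l (ereal h) ls1"
    show "mscE r (ereal h) (\<lambda>ls2. coal (length (ls1 @ ls2)) h tp c2 (ls1 @ ls2))
      \<le> mscE r (ereal h) (\<lambda>ls2. coal (length (ls1 @ ls2)) h tp c1 (ls1 @ ls2))"
    proof (rule Node.IH(2))
      fix ls2 assume g2: "gd r (ereal h) ls2"
      let ?R = "\<lambda>a xs ys. xs = ys \<and> CI ?M a xs \<and> ereal a < tp"
      show "coal (length (ls1 @ ls2)) h tp c2 (ls1 @ ls2) \<le> coal (length (ls1 @ ls2)) h tp c1 (ls1 @ ls2)"
      proof (rule coal_sim[where R = ?R])
        show "?R h (ls1 @ ls2) (ls1 @ ls2)"
          using g1 g2 htp by (auto simp: gd_def CI_def less_imp_le)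
      next
        fix a xs ys t assume R: "?R a xs ys" and t: "0 < t" "ereal (a + t) < tp"
        show "\<exists>\<sigma>. bij_betw \<sigma> (pairs (length xs)) (pairs (length xs)) \<and>
          (\<forall>p\<in>pairs (length xs). ?R (a + t) (merge_pair (a + t) p xs) (merge_pair (a + t) (\<sigma> p) ys))"
          using R t CI_merge by (intro exI[of _ id]) auto
      next
        fix a xs ys assume R: "?R a xs ys"
        then have "gd (Node h l r) tp xs"
          by (auto simp: gd_def CI_def intro: le_less_trans[of _ "ereal a"])
        then show "c2 ys \<le> c1 xs" using R Node.prems(3) by simp
      qed auto
    qed (use hl g1 in auto)
  qed (use hl in auto)
qed

lemma sum_avg_le:
  assumes "finite P" "P \<noteq> {}" "\<And>p. p \<in> P \<Longrightarrow> X p \<le> K"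
  shows "(\<Sum>p\<in>P. ennreal (1 / real (card P)) * X p) \<le> K"
proof -
  have "(\<Sum>p\<in>P. ennreal (1 / real (card P)) * X p) \<le> (\<Sum>p\<in>P. ennreal (1 / real (card P)) * K)"
    using assms by (intro sum_mono mult_left_mono) auto
  also have "\<dots> = of_nat (card P) * ennreal (1 / real (card P)) * K" by (simp add: mult.assoc)
  also have "of_nat (card P) * ennreal (1 / real (card P)) = 1"
    using assms by (simp add: ennreal_of_nat_eq_real_of_nat ennreal_mult'[symmetric] card_gt_0_iff)
  finally show ?thesis by simp
qed

lemma sum_avg_ge:
  assumes "finite P" "P \<noteq> {}" "\<And>p. p \<in> P \<Longrightarrow> K \<le> X p"
  shows "K \<le> (\<Sum>p\<in>P. ennreal (1 / real (card P)) * X p)"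
proof -
  have "of_nat (card P) * ennreal (1 / real (card P)) = 1"
    using assms by (simp add: ennreal_of_nat_eq_real_of_nat ennreal_mult'[symmetric] card_gt_0_iff)
  moreover have "(\<Sum>p\<in>P. ennreal (1 / real (card P)) * K) = of_nat (card P) * ennreal (1 / real (card P)) * K"
    by (simp add: mult.assoc)
  ultimately have "K = (\<Sum>p\<in>P. ennreal (1 / real (card P)) * K)" by simp
  also have "\<dots> \<le> (\<Sum>p\<in>P. ennreal (1 / real (card P)) * X p)"
    using assms by (intro sum_mono mult_left_mono) auto
  finally show ?thesis .
qed

lemma pairs_ne: "2 \<le> n \<Longrightarrow> pairs n \<noteq> {}"
  using pairs_01 by blast

lemma lamf_ge1: "2 \<le> n \<Longrightarrow> 1 \<le> lamf n"
proof -
  assume "2 \<le> n"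
  then have "2 \<le> n * (n - 1)" by (metis One_nat_def Suc_1 Suc_le_lessD diff_Suc_1 le_add_diff_inverse2 less_imp_le mult_le_mono mult_1_right less_eq_Suc_le nat_mult_1 diff_le_mono)
  then show ?thesis unfolding lamf_def by (metis divide_le_eq_1_pos le_divide_eq_1_pos of_nat_le_iff of_nat_numeral zero_less_numeral)
qed

lemma lamf_nonneg: "0 \<le> lamf n"
  by (simp add: lamf_def)

lemma lamf_le: "n \<le> N \<Longrightarrow> lamf n \<le> real (N * N)"
proof -
  assume "n \<le> N"
  then have "n * (n - 1) \<le> N * N" by (simp add: mult_le_mono)
  then have "real (n * (n - 1)) \<le> real (N * N)" by linarith
  moreover have "real (n * (n - 1)) / 2 \<le> real (n * (n - 1))"
    using of_nat_0_le_iff[of "n * (n - 1)"] by linarith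
  ultimately show ?thesis unfolding lamf_def by linarith
qed

lemma lamf_le1: "n \<le> 1 \<Longrightarrow> lamf n = 0"
  by (cases n) (auto simp: lamf_def)

lemma FTC_exp:
  assumes "0 < l" "0 \<le> D"
  shows "(\<integral>\<^sup>+ t. ennreal (l * exp (- l * t)) * indicator {0..D} t \<partial>lborel) = ennreal (1 - exp (- l * D))"
proof -
  have "(\<integral>\<^sup>+ t. ennreal (l * exp (- l * t)) * indicator {0..D} t \<partial>lborel)
     = ennreal ((\<lambda>t. - exp (- l * t)) D - (\<lambda>t. - exp (- l * t)) 0)"
    by (rule nn_integral_FTC_Icc) (use assms in \<open>auto intro!: derivative_eq_intros\<close>)
  then show ?thesis by simp
qed

lemma FTC_exp_lin:
  assumes "0 < l" "0 \<le> al"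
  shows "(\<integral>\<^sup>+ t. ennreal (l * exp (- l * t) * (al + t)) * indicator {0..} t \<partial>lborel) = ennreal (al + 1 / l)"
proof -
  let ?F = "\<lambda>t. - (al + t + 1 / l) * exp (- l * t)"
  have lim: "(?F \<longlongrightarrow> 0) at_top" using assms(1) by real_asymp
  have "(\<integral>\<^sup>+ t. ennreal (l * exp (- l * t) * (al + t)) * indicator {0..} t \<partial>lborel) = ennreal (0 - ?F 0)"
  proof (rule nn_integral_FTC_atLeast[OF _ _ _ lim])
    show "(\<lambda>t. l * exp (- l * t) * (al + t)) \<in> borel_measurable borel" by measurable
    fix x :: real assume x: "0 \<le> x"
    show "0 \<le> l * exp (- l * x) * (al + x)" using assms x by auto
    show "(?F has_real_derivative l * exp (- l * x) * (al + x)) (at x)"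
      using assms by (auto intro!: derivative_eq_intros simp: field_simps)
  qed
  then show ?thesis by (simp add: add.commute)
qed

lemma coal_le_const:
  assumes "I a xs"
    and step: "\<And>a xs t p. I a xs \<Longrightarrow> 0 < t \<Longrightarrow> a + t < \<beta> \<Longrightarrow> p \<in> pairs (length xs) \<Longrightarrow> I (a + t) (merge_pair (a + t) p xs)"
    and le: "\<And>a xs. I a xs \<Longrightarrow> a \<le> \<beta>"
    and ex: "\<And>a xs. I a xs \<Longrightarrow> c xs \<le> K"
  shows "coal k a (ereal \<beta>) c xs \<le> K"
  using assms(1)
proof (induction k arbitrary: a xs)
  case 0 then show ?case using ex by simp
next
  case (Suc k)
  show ?case
  proof (cases "length xs \<le> 1")
    case True then show ?thesis using ex[OF Suc.prems] by (simp add: coal_le1)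
  next
    case False
    then have l2: "2 \<le> length xs" by simp
    let ?n = "length xs"
    let ?l = "lamf ?n"
    let ?D = "\<beta> - a"
    have lpos: "0 < ?l" using lamf_ge1[OF l2] by simp
    have D: "0 \<le> ?D" using le[OF Suc.prems] by simp
    have "(\<integral>\<^sup>+ t. indicator {t. 0 < t \<and> ereal (a + t) < ereal \<beta>} t * ennreal (?l * exp (- ?l * t)) *
          (\<Sum>p\<in>pairs ?n. ennreal (1 / real (card (pairs ?n))) * coal k (a + t) (ereal \<beta>) c (merge_pair (a + t) p xs)) \<partial>lborel)
       \<le> (\<integral>\<^sup>+ t. K * (ennreal (?l * exp (- ?l * t)) * indicator {0..?D} t) \<partial>lborel)"
    proof (intro nn_integral_mono)
      fix t
      show "indicator {t. 0 < t \<and> ereal (a + t) < ereal \<beta>} t * ennreal (?l * exp (- ?l * t)) *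
          (\<Sum>p\<in>pairs ?n. ennreal (1 / real (card (pairs ?n))) * coal k (a + t) (ereal \<beta>) c (merge_pair (a + t) p xs))
        \<le> K * (ennreal (?l * exp (- ?l * t)) * indicator {0..?D} t)"
      proof (cases "0 < t \<and> a + t < \<beta>")
        case True
        have "(\<Sum>p\<in>pairs ?n. ennreal (1 / real (card (pairs ?n))) * coal k (a + t) (ereal \<beta>) c (merge_pair (a + t) p xs)) \<le> K"
          using True by (intro sum_avg_le pairs_ne l2 Suc.IH step[OF Suc.prems]) auto
        then have "ennreal (?l * exp (- ?l * t)) *
          (\<Sum>p\<in>pairs ?n. ennreal (1 / real (card (pairs ?n))) * coal k (a + t) (ereal \<beta>) c (merge_pair (a + t) p xs))
          \<le> ennreal (?l * exp (- ?l * t)) * K"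
          by (rule mult_left_mono) auto
        then show ?thesis using True
          by (simp add: mult.commute)
      qed auto
    qed
    also have "\<dots> = K * ennreal (1 - exp (- ?l * ?D))"
      using FTC_exp[OF lpos D] by (subst nn_integral_cmult) auto
    finally have J: "(\<integral>\<^sup>+ t. indicator {t. 0 < t \<and> ereal (a + t) < ereal \<beta>} t * ennreal (?l * exp (- ?l * t)) *
          (\<Sum>p\<in>pairs ?n. ennreal (1 / real (card (pairs ?n))) * coal k (a + t) (ereal \<beta>) c (merge_pair (a + t) p xs)) \<partial>lborel)
       \<le> K * ennreal (1 - exp (- ?l * ?D))" .
    have e1: "exp (- ?l * ?D) \<le> 1" using lpos D by auto
    have "coal (Suc k) a (ereal \<beta>) c xs \<le> K * ennreal (1 - exp (- ?l * ?D)) + ennreal (exp (- ?l * ?D)) * K"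
      unfolding coal_Suc_ge2[OF l2] using J ex[OF Suc.prems]
      by (auto intro!: add_mono mult_left_mono)
    also have "\<dots> = K * (ennreal (1 - exp (- ?l * ?D)) + ennreal (exp (- ?l * ?D)))"
      by (simp add: distrib_left mult.commute)
    also have "ennreal (1 - exp (- ?l * ?D)) + ennreal (exp (- ?l * ?D)) = 1"
      using e1 by (subst ennreal_plus[symmetric]) auto
    finally show ?thesis by simp
  qed
qed

lemma coal_le_root:
  assumes "I a xs" "length xs \<le> k"
    and step: "\<And>a xs t p. I a xs \<Longrightarrow> 0 < t \<Longrightarrow> p \<in> pairs (length xs) \<Longrightarrow> I (a + t) (merge_pair (a + t) p xs)"
    and nn: "\<And>a xs. I a xs \<Longrightarrow> 0 \<le> a"
    and ex: "\<And>a xs. I a xs \<Longrightarrow> length xs \<le> 1 \<Longrightarrow> c xs \<le> ennreal a"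
  shows "coal k a \<infinity> c xs \<le> ennreal (a + 2 * real (length xs))"
  using assms(1,2)
proof (induction k arbitrary: a xs)
  case 0 then show ?case using ex[OF 0(1)] by (simp add: ennreal_leI order_trans)
next
  case (Suc k)
  show ?case
  proof (cases "length xs \<le> 1")
    case True then show ?thesis using ex[OF Suc.prems(1) True]
      by (simp add: coal_le1) (erule order_trans, rule ennreal_leI, simp)
  next
    case False
    then have l2: "2 \<le> length xs" by simp
    let ?n = "length xs"
    let ?l = "lamf ?n"
    let ?al = "a + 2 * real (?n - 1)"
    have lpos: "0 < ?l" using lamf_ge1[OF l2] by simp
    have a0: "0 \<le> a" using nn[OF Suc.prems(1)] .
    have "(\<integral>\<^sup>+ t. indicator {t. 0 < t \<and> ereal (a + t) < \<infinity>} t * ennreal (?l * exp (- ?l * t)) *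
          (\<Sum>p\<in>pairs ?n. ennreal (1 / real (card (pairs ?n))) * coal k (a + t) \<infinity> c (merge_pair (a + t) p xs)) \<partial>lborel)
       \<le> (\<integral>\<^sup>+ t. ennreal (?l * exp (- ?l * t) * (?al + t)) * indicator {0..} t \<partial>lborel)"
    proof (intro nn_integral_mono)
      fix t
      show "indicator {t. 0 < t \<and> ereal (a + t) < \<infinity>} t * ennreal (?l * exp (- ?l * t)) *
          (\<Sum>p\<in>pairs ?n. ennreal (1 / real (card (pairs ?n))) * coal k (a + t) \<infinity> c (merge_pair (a + t) p xs))
        \<le> ennreal (?l * exp (- ?l * t) * (?al + t)) * indicator {0..} t"
      proof (cases "0 < t")
        case True
        have "(\<Sum>p\<in>pairs ?n. ennreal (1 / real (card (pairs ?n))) * coal k (a + t) \<infinity> c (merge_pair (a + t) p xs))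
            \<le> ennreal (a + t + 2 * real (?n - 1))"
        proof (intro sum_avg_le pairs_ne l2)
          fix p assume p: "p \<in> pairs ?n"
          have lm: "length (merge_pair (a + t) p xs) = ?n - 1" using length_merge[OF p] .
          show "coal k (a + t) \<infinity> c (merge_pair (a + t) p xs) \<le> ennreal (a + t + 2 * real (?n - 1))"
            using Suc.IH[OF step[OF Suc.prems(1) True p]] lm Suc.prems(2) by simp
        qed auto
        then have "ennreal (?l * exp (- ?l * t)) *
          (\<Sum>p\<in>pairs ?n. ennreal (1 / real (card (pairs ?n))) * coal k (a + t) \<infinity> c (merge_pair (a + t) p xs))
          \<le> ennreal (?l * exp (- ?l * t)) * ennreal (?al + t)"
          by (intro mult_left_mono) (auto simp: ac_simps)
        also have "\<dots> = ennreal (?l * exp (- ?l * t) * (?al + t))"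
          using lpos a0 True by (subst ennreal_mult[symmetric]) auto
        finally show ?thesis using True by simp
      qed auto
    qed
    also have "\<dots> = ennreal (?al + 1 / ?l)"
      by (rule FTC_exp_lin[OF lpos]) (use a0 in simp)
    also have "\<dots> \<le> ennreal (a + 2 * real ?n)"
    proof (rule ennreal_leI)
      have "1 / ?l \<le> 1" using lamf_ge1[OF l2] by simp
      then show "?al + 1 / ?l \<le> a + 2 * real ?n" using l2 by (simp add: of_nat_diff)
    qed
    finally show ?thesis unfolding coal_Suc_ge2[OF l2] by simp
  qed
qed

lemma mscE_le_const:
  assumes "heights_ok T" "ht T < tp" "\<And>ls. gd T (ereal tp) ls \<Longrightarrow> c ls \<le> K"
  shows "mscE T (ereal tp) c \<le> K"
  using assms
proof (induction T arbitrary: tp c)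
  case (Leaf x)
  have "gd (Leaf x) tp [Leaf x]" using Leaf.prems(2) by (simp add: gd_def)
  then show ?case using Leaf.prems(3) by (simp add: mscE_Leaf)
next
  case (Node h l r)
  have hl: "heights_ok l" "ht l < h" "heights_ok r" "ht r < h" using Node.prems(1) by auto
  have htp: "h < tp" using Node.prems(2) by simp
  let ?M = "mset (leaves (Node h l r))"
  show ?case unfolding mscE.simps
  proof (rule Node.IH(1))
    fix ls1 assume g1: "gd l (ereal h) ls1"
    show "mscE r (ereal h) (\<lambda>ls2. coal (length (ls1 @ ls2)) h (ereal tp) c (ls1 @ ls2)) \<le> K"
    proof (rule Node.IH(2))
      fix ls2 assume g2: "gd r (ereal h) ls2"
      let ?I = "\<lambda>a xs. CI ?M a xs \<and> a < tp"
      show "coal (length (ls1 @ ls2)) h (ereal tp) c (ls1 @ ls2) \<le> K"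
      proof (rule coal_le_const[where I = ?I])
        show "?I h (ls1 @ ls2)"
          using g1 g2 htp by (auto simp: gd_def CI_def less_imp_le)
      next
        fix a xs t p assume "?I a xs" "0 < t" "a + t < tp" "p \<in> pairs (length xs)"
        then show "?I (a + t) (merge_pair (a + t) p xs)" using CI_merge by auto
      next
        fix a xs assume I: "?I a xs"
        then have "gd (Node h l r) tp xs"
          by (auto simp: gd_def CI_def)
        then show "c xs \<le> K" using Node.prems(3) by simp
      qed auto
    qed (use hl g1 in auto)
  qed (use hl in auto)
qed

lemma coal_nocoal:
  assumes "a \<le> \<beta>"
  shows "ennreal (exp (- lamf (length xs) * (\<beta> - a))) * c xs \<le> coal k a (ereal \<beta>) c xs"
proof (cases k)
  case 0
  have "exp (- lamf (length xs) * (\<beta> - a)) \<le> 1"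
    using assms lamf_nonneg[of "length xs"] by auto
  then have "ennreal (exp (- lamf (length xs) * (\<beta> - a))) * c xs \<le> 1 * c xs"
    by (intro mult_right_mono) auto
  then show ?thesis using 0 by simp
next
  case (Suc k')
  show ?thesis
  proof (cases "length xs \<le> 1")
    case True then show ?thesis using Suc by (simp add: coal_le1 lamf_le1)
  next
    case False
    then have l2: "2 \<le> length xs" by simp
    show ?thesis unfolding Suc coal_Suc_ge2[OF l2] by simp
  qed
qed

lemma exp_lamf_ge:
  assumes "n \<le> N" "0 \<le> d"
  shows "exp (- real (N * N) * d) \<le> exp (- lamf n * d)"
  using lamf_le[OF assms(1)] assms(2) by (auto intro!: mult_right_mono)

lemma mscE_ge_mass:
  assumes "heights_ok T" "ht T < tp"
  shows "\<exists>\<mu>>0. \<forall>c \<kappa>. (\<forall>ls. gd T (ereal tp) ls \<longrightarrow> \<kappa> \<le> c ls) \<longrightarrow> ennreal \<mu> * \<kappa> \<le> mscE T (ereal tp) c"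
  using assms
proof (induction T arbitrary: tp)
  case (Leaf x)
  have "gd (Leaf x) tp [Leaf x]" using Leaf.prems(2) by (simp add: gd_def)
  then show ?case by (intro exI[of _ 1]) (auto simp: mscE_Leaf)
next
  case (Node h l r)
  have hl: "heights_ok l" "ht l < h" "heights_ok r" "ht r < h" using Node.prems(1) by auto
  have htp: "h < tp" using Node.prems(2) by simp
  obtain \<mu>l where \<mu>l: "\<mu>l > 0" "\<forall>c \<kappa>. (\<forall>ls. gd l (ereal h) ls \<longrightarrow> \<kappa> \<le> c ls) \<longrightarrow> ennreal \<mu>l * \<kappa> \<le> mscE l (ereal h) c"
    using Node.IH(1)[OF hl(1,2)] by blast
  obtain \<mu>r where \<mu>r: "\<mu>r > 0" "\<forall>c \<kappa>. (\<forall>ls. gd r (ereal h) ls \<longrightarrow> \<kappa> \<le> c ls) \<longrightarrow> ennreal \<mu>r * \<kappa> \<le> mscE r (ereal h) c"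
    using Node.IH(2)[OF hl(3,4)] by blast
  let ?N = "length (leaves (Node h l r))"
  let ?e = "exp (- real (?N * ?N) * (tp - h))"
  show ?case
  proof (intro exI[of _ "\<mu>l * (\<mu>r * ?e)"] conjI allI impI)
    show "0 < \<mu>l * (\<mu>r * ?e)" using \<mu>l \<mu>r by auto
    fix c and \<kappa> :: ennreal assume hyp: "\<forall>ls. gd (Node h l r) (ereal tp) ls \<longrightarrow> \<kappa> \<le> c ls"
    have "ennreal \<mu>l * (ennreal \<mu>r * (ennreal ?e * \<kappa>)) \<le> mscE (Node h l r) (ereal tp) c"
      unfolding mscE.simps
    proof (rule \<mu>l(2)[rule_format])
      fix ls1 assume g1: "gd l (ereal h) ls1"
      show "ennreal \<mu>r * (ennreal ?e * \<kappa>) \<le> mscE r (ereal h) (\<lambda>ls2. coal (length (ls1 @ ls2)) h (ereal tp) c (ls1 @ ls2))"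
      proof (rule \<mu>r(2)[rule_format])
        fix ls2 assume g2: "gd r (ereal h) ls2"
        have g: "gd (Node h l r) (ereal tp) (ls1 @ ls2)"
          using g1 g2 htp by (auto simp: gd_def intro: less_trans)
        have "mset (lvs (ls1 @ ls2)) = mset (leaves (Node h l r))" using g by (simp only: gd_def)
        from mset_lvs_length[OF this] have len: "length (ls1 @ ls2) \<le> ?N" by simp
        have "ennreal ?e * \<kappa> \<le> ennreal (exp (- lamf (length (ls1 @ ls2)) * (tp - h))) * c (ls1 @ ls2)"
          using hyp g exp_lamf_ge[OF len, of "tp - h"] htp
          by (intro mult_mono) (auto intro: ennreal_leI)
        also have "\<dots> \<le> coal (length (ls1 @ ls2)) h (ereal tp) c (ls1 @ ls2)"
          using htp by (intro coal_nocoal) auto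
        finally show "ennreal ?e * \<kappa> \<le> coal (length (ls1 @ ls2)) h (ereal tp) c (ls1 @ ls2)" .
      qed
    qed
    then show "ennreal (\<mu>l * (\<mu>r * ?e)) * \<kappa> \<le> mscE (Node h l r) (ereal tp) c"
      using \<mu>l \<mu>r by (simp add: ennreal_mult mult.assoc)
  qed
qed

lemma coal_ge_root:
  assumes "I a xs" "length xs \<le> k"
    and step: "\<And>a xs t p. I a xs \<Longrightarrow> 0 < t \<Longrightarrow> p \<in> pairs (length xs) \<Longrightarrow> I (a + t) (merge_pair (a + t) p xs)"
    and lenN: "\<And>a xs. I a xs \<Longrightarrow> length xs \<le> N"
    and ex: "\<And>a xs. I a xs \<Longrightarrow> length xs \<le> 1 \<Longrightarrow> \<kappa> \<le> c xs"
  shows "ennreal (exp (- 2 * real (N * N) * real k)) * \<kappa> \<le> coal k a \<infinity> c xs"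
  using assms(1,2)
proof (induction k arbitrary: a xs)
  case 0 then show ?case using ex[OF 0(1)] by simp
next
  case (Suc k)
  let ?E = "exp (- 2 * real (N * N) * real k)"
  let ?E' = "exp (- 2 * real (N * N) * real (Suc k))"
  have E1: "?E' \<le> 1" by simp
  show ?case
  proof (cases "length xs \<le> 1")
    case True
    have "ennreal ?E' * \<kappa> \<le> 1 * \<kappa>" using E1 by (intro mult_right_mono) auto
    also have "\<dots> \<le> c xs" using ex[OF Suc.prems(1) True] by simp
    also have "c xs = coal (Suc k) a \<infinity> c xs" using True by (simp add: coal_le1)
    finally show ?thesis .
  next
    case False
    then have l2: "2 \<le> length xs" by simp
    let ?n = "length xs"
    let ?l = "lamf ?n"
    have lpos: "1 \<le> ?l" using lamf_ge1[OF l2] by simp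
    have lN: "?l \<le> real (N * N)" using lamf_le[OF lenN[OF Suc.prems(1)]] .
    let ?C = "ennreal (?l * exp (- ?l * 2)) * (ennreal ?E * \<kappa>)"
    have "(\<integral>\<^sup>+ t. ?C * indicator {1..2::real} t \<partial>lborel) \<le>
      (\<integral>\<^sup>+ t. indicator {t. 0 < t \<and> ereal (a + t) < \<infinity>} t * ennreal (?l * exp (- ?l * t)) *
          (\<Sum>p\<in>pairs ?n. ennreal (1 / real (card (pairs ?n))) * coal k (a + t) \<infinity> c (merge_pair (a + t) p xs)) \<partial>lborel)"
    proof (intro nn_integral_mono)
      fix t :: real
      show "?C * indicator {1..2::real} t \<le> indicator {t. 0 < t \<and> ereal (a + t) < \<infinity>} t * ennreal (?l * exp (- ?l * t)) *
          (\<Sum>p\<in>pairs ?n. ennreal (1 / real (card (pairs ?n))) * coal k (a + t) \<infinity> c (merge_pair (a + t) p xs))"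
      proof (cases "t \<in> {1..2}")
        case True
        then have t0: "0 < t" by auto
        have s: "ennreal ?E * \<kappa> \<le> (\<Sum>p\<in>pairs ?n. ennreal (1 / real (card (pairs ?n))) * coal k (a + t) \<infinity> c (merge_pair (a + t) p xs))"
        proof (intro sum_avg_ge pairs_ne l2)
          fix p assume p: "p \<in> pairs ?n"
          show "ennreal ?E * \<kappa> \<le> coal k (a + t) \<infinity> c (merge_pair (a + t) p xs)"
            using Suc.IH[OF step[OF Suc.prems(1) t0 p]] length_merge[OF p] Suc.prems(2) by simp
        qed auto
        have "?l * exp (- ?l * 2) \<le> ?l * exp (- ?l * t)"
          using True lpos by (intro mult_left_mono) auto
        then have "?C \<le> ennreal (?l * exp (- ?l * t)) *
          (\<Sum>p\<in>pairs ?n. ennreal (1 / real (card (pairs ?n))) * coal k (a + t) \<infinity> c (merge_pair (a + t) p xs))"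
          using s by (intro mult_mono) (auto intro: ennreal_leI)
        then show ?thesis using True by auto
      qed auto
    qed
    also have "(\<integral>\<^sup>+ t. ?C * indicator {1..2::real} t \<partial>lborel) = ?C"
      by (subst nn_integral_cmult_indicator) auto
    finally have J: "?C \<le> (\<integral>\<^sup>+ t. indicator {t. 0 < t \<and> ereal (a + t) < \<infinity>} t * ennreal (?l * exp (- ?l * t)) *
          (\<Sum>p\<in>pairs ?n. ennreal (1 / real (card (pairs ?n))) * coal k (a + t) \<infinity> c (merge_pair (a + t) p xs)) \<partial>lborel)" .
    have "exp (- 2 * real (N * N)) \<le> exp (- ?l * 2)" using lN by auto
    also have "exp (- ?l * 2) \<le> ?l * exp (- ?l * 2)" using lpos by auto
    finally have f1: "exp (- 2 * real (N * N)) * ?E \<le> ?l * exp (- ?l * 2) * ?E"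
      by (intro mult_right_mono) auto
    have f2: "exp (- 2 * real (N * N)) * ?E = ?E'"
      by (simp add: exp_add[symmetric] algebra_simps)
    have r: "?E' \<le> ?l * exp (- ?l * 2) * ?E" using f1 f2 by linarith
    have "ennreal ?E' * \<kappa> \<le> ennreal (?l * exp (- ?l * 2) * ?E) * \<kappa>"
      by (rule mult_right_mono[OF ennreal_leI[OF r]]) simp
    also have "\<dots> = ?C"
      using lpos by (simp add: ennreal_mult mult.assoc)
    also note J
    finally show ?thesis unfolding coal_Suc_ge2[OF l2] by (rule order_trans) simp
  qed
qed

section \<open>Coupling relation\<close>

fun Lof :: "real \<Rightarrow> nat \<Rightarrow> utree \<Rightarrow> utree" where
  "Lof h i (Leaf x) = Leaf x"
| "Lof h i (Node t l r) = (if t < h then Node t l r else if i \<in> set (leaves l) then Lof h i l else Lof h i r)"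

definition sz :: "utree \<Rightarrow> real" where "sz T = real (length (leaves T))"

definition Dv :: "real \<Rightarrow> nat \<Rightarrow> utree \<Rightarrow> real" where
  "Dv h i L = h - (h - ht L) / sz L - fp L i"

definition gg :: "nat \<Rightarrow> utree \<Rightarrow> real \<Rightarrow> real" where
  "gg x T t = (t - ht T) / sz T + fp T x"

definition Pc :: "real \<Rightarrow> nat \<Rightarrow> nat \<Rightarrow> nat \<Rightarrow> utree \<Rightarrow> utree \<Rightarrow> bool" where
  "Pc h m i c T T' \<longleftrightarrow> (if m \<in> set (leaves T) then
      i \<in> set (leaves T') \<and> length (leaves T') = length (leaves T) + c \<and> (i \<in> set (leaves T) \<longrightarrow> c = 0)
      \<and> (T = Leaf m \<or> (ht T = ht T' \<and> h \<le> ht T)) \<and> 0 \<le> fp T' i \<and> 0 \<le> Dv h i (Lof h i T')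
      \<and> (\<forall>t. max h (max (ht T) (ht T')) \<le> t \<longrightarrow> gg i T' t + Dv h i (Lof h i T') \<le> gg m T t)
    else if i \<in> set (leaves T) then
      m \<in> set (leaves T') \<and> i \<notin> set (leaves T') \<and> length (leaves T) = length (leaves T') + c
    else m \<notin> set (leaves T') \<and> i \<notin> set (leaves T') \<and> length (leaves T) = length (leaves T'))"

lemma sz_pos: "0 < sz T"
  unfolding sz_def using length_leaves_pos[of T] by simp

lemma fp_Node_swap:
  assumes "set (leaves Y1) \<inter> set (leaves Y2) = {}"
  shows "fp (Node t Y2 Y1) x = fp (Node t Y1 Y2) x"
  using assms by auto

lemma Lof_Node_swap:
  assumes "set (leaves Y1) \<inter> set (leaves Y2) = {}" "h \<le> t" "i \<in> set (leaves Y1) \<union> set (leaves Y2)"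
  shows "Lof h i (Node t Y2 Y1) = Lof h i (Node t Y1 Y2)"
  using assms by auto

lemma Pc_swap_right:
  assumes "set (leaves Y1) \<inter> set (leaves Y2) = {}" "h \<le> t"
  shows "Pc h m i c T (Node t Y2 Y1) = Pc h m i c T (Node t Y1 Y2)"
proof -
  have e: "set (leaves (Node t Y2 Y1)) = set (leaves (Node t Y1 Y2))"
    "length (leaves (Node t Y2 Y1)) = length (leaves (Node t Y1 Y2))"
    "ht (Node t Y2 Y1) = ht (Node t Y1 Y2)"
    "sz (Node t Y2 Y1) = sz (Node t Y1 Y2)"
    by (auto simp: sz_def)
  show ?thesis
  proof (cases "i \<in> set (leaves Y1) \<union> set (leaves Y2)")
    case True
    show ?thesis unfolding Pc_def gg_def e fp_Node_swap[OF assms(1)] Lof_Node_swap[OF assms True] ..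
  next
    case False
    then have "i \<notin> set (leaves (Node t Y2 Y1))" "i \<notin> set (leaves (Node t Y1 Y2))" by auto
    then show ?thesis unfolding Pc_def e by simp
  qed
qed

lemma Pc_swap_left:
  assumes "set (leaves X1) \<inter> set (leaves X2) = {}"
  shows "Pc h m i c (Node t X2 X1) T' = Pc h m i c (Node t X1 X2) T'"
proof -
  have e: "set (leaves (Node t X2 X1)) = set (leaves (Node t X1 X2))"
    "length (leaves (Node t X2 X1)) = length (leaves (Node t X1 X2))"
    "ht (Node t X2 X1) = ht (Node t X1 X2)"
    "sz (Node t X2 X1) = sz (Node t X1 X2)"
    "(Node t X2 X1 = Leaf m) = (Node t X1 X2 = Leaf m)"
    by (auto simp: sz_def)
  show ?thesis unfolding Pc_def gg_def e fp_Node_swap[OF assms(1)] ..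
qed

lemma Pc_c_indep:
  "m \<notin> set (leaves T) \<Longrightarrow> i \<notin> set (leaves T) \<Longrightarrow> Pc h m i c T T' = Pc h m i c' T T'"
  by (simp add: Pc_def)

lemma Pc_target:
  assumes P: "Pc h m i c X1 Y1" and mX1: "m \<in> set (leaves X1)" and mX2: "m \<notin> set (leaves X2)"
    and iY1: "i \<in> set (leaves Y1)" and iY2: "i \<notin> set (leaves Y2)"
    and ha: "h \<le> a" "a < t" and hts: "ht X1 \<le> a" "ht Y1 \<le> a"
    and len: "length (leaves Y1) + length (leaves Y2) = length (leaves X1) + length (leaves X2) + c'"
    and c': "i \<in> set (leaves X1) \<or> i \<in> set (leaves X2) \<longrightarrow> c' = 0"
  shows "Pc h m i c' (Node t X1 X2) (Node t Y1 Y2)"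
proof -
  let ?N = "Node t X1 X2" and ?N' = "Node t Y1 Y2"
  have P1: "0 \<le> fp Y1 i" "0 \<le> Dv h i (Lof h i Y1)"
    "\<And>s. max h (max (ht X1) (ht Y1)) \<le> s \<Longrightarrow> gg i Y1 s + Dv h i (Lof h i Y1) \<le> gg m X1 s"
    using P mX1 unfolding Pc_def by auto
  have lof: "Lof h i ?N' = Lof h i Y1" using iY1 ha by auto
  have fpN': "fp ?N' i = gg i Y1 t" using iY1 by (simp add: gg_def sz_def)
  have fpN: "fp ?N m = gg m X1 t" using mX1 by (simp add: gg_def sz_def)
  have gt: "gg i Y1 t + Dv h i (Lof h i Y1) \<le> gg m X1 t"
    using P1(3)[of t] ha hts by auto
  have szle: "sz ?N \<le> sz ?N'" using len by (simp add: sz_def)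
  have Y1t: "ht Y1 \<le> t" using hts ha by simp
  have fp0: "0 \<le> fp ?N' i"
    using fpN' P1(1) Y1t sz_pos[of Y1] unfolding gg_def by simp
  have gmain: "gg i ?N' s + Dv h i (Lof h i ?N') \<le> gg m ?N s" if s: "max h (max (ht ?N) (ht ?N')) \<le> s" for s
  proof -
    have st: "t \<le> s" using s by simp
    have "(s - t) / sz ?N' \<le> (s - t) / sz ?N"
      using st szle sz_pos[of ?N] by (intro divide_left_mono) auto
    then show ?thesis using gt unfolding gg_def lof fpN' fpN by (simp add: gg_def)
  qed
  show ?thesis
    unfolding Pc_def using mX1 iY1 len c' ha fp0 P1(2) gmain lof
    by (auto simp: sz_def)
qed

lemma Pc_merge_main:
  assumes P1: "Pc h m i c X1 Y1" and P2: "Pc h m i c X2 Y2"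
    and dX: "set (leaves X1) \<inter> set (leaves X2) = {}" and dY: "set (leaves Y1) \<inter> set (leaves Y2) = {}"
    and ha: "h \<le> a" "a < t" and hts: "ht X1 \<le> a" "ht Y1 \<le> a" "ht X2 \<le> a" "ht Y2 \<le> a"
    and mi: "m \<noteq> i"
  shows "\<exists>c'. Pc h m i c' (Node t X1 X2) (Node t Y1 Y2) \<and>
    (c' \<noteq> c \<longrightarrow> m \<in> set (leaves (Node t X1 X2)) \<and> i \<in> set (leaves (Node t X1 X2)))"
proof -
  let ?mem = "\<lambda>x T. x \<in> set (leaves T)"
  have case_TO: "\<exists>c'. Pc h m i c' (Node t X1 X2) (Node t Y1 Y2) \<and>
    (c' \<noteq> c \<longrightarrow> m \<in> set (leaves (Node t X1 X2)) \<and> i \<in> set (leaves (Node t X1 X2)))"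
    if P1: "Pc h m i c X1 Y1" and P2: "Pc h m i c X2 Y2" and hts: "ht X1 \<le> a" "ht Y1 \<le> a"
      and m1: "?mem m X1" and dX: "set (leaves X1) \<inter> set (leaves X2) = {}"
    for X1 X2 Y1 Y2
  proof -
    have m2: "\<not> ?mem m X2" using m1 dX by auto
    have iY1: "?mem i Y1" and lY1: "length (leaves Y1) = length (leaves X1) + c"
      and c0: "?mem i X1 \<longrightarrow> c = 0"
      using P1 m1 unfolding Pc_def by auto
    show ?thesis
    proof (cases "?mem i X2")
      case True
      have sp: "?mem m Y2" "\<not> ?mem i Y2" "length (leaves X2) = length (leaves Y2) + c"
        using P2 m2 True unfolding Pc_def by auto
      have "Pc h m i 0 (Node t X1 X2) (Node t Y1 Y2)"
        by (rule Pc_target[OF P1 m1 m2 iY1 sp(2) ha hts]) (use lY1 sp(3) in auto)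
      then show ?thesis using m1 True by (intro exI[of _ 0]) auto
    next
      case False
      have od: "\<not> ?mem m Y2" "\<not> ?mem i Y2" "length (leaves X2) = length (leaves Y2)"
        using P2 m2 False unfolding Pc_def by auto
      have "Pc h m i c (Node t X1 X2) (Node t Y1 Y2)"
        by (rule Pc_target[OF P1 m1 m2 iY1 od(2) ha hts]) (use lY1 od(3) c0 False in auto)
      then show ?thesis by blast
    qed
  qed
  have case_SO: "Pc h m i c (Node t X1 X2) (Node t Y1 Y2)"
    if P1: "Pc h m i c X1 Y1" and P2: "Pc h m i c X2 Y2"
      and m1: "\<not> ?mem m X1" and i1: "?mem i X1" and m2: "\<not> ?mem m X2" and i2: "\<not> ?mem i X2"
    for X1 X2 Y1 Y2
    using P1 P2 m1 i1 m2 i2 unfolding Pc_def by auto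
  have case_OO: "Pc h m i c (Node t X1 X2) (Node t Y1 Y2)"
    if P1: "Pc h m i c X1 Y1" and P2: "Pc h m i c X2 Y2"
      and m1: "\<not> ?mem m X1" and i1: "\<not> ?mem i X1" and m2: "\<not> ?mem m X2" and i2: "\<not> ?mem i X2"
    for X1 X2 Y1 Y2
    using P1 P2 m1 i1 m2 i2 unfolding Pc_def by auto
  have ht: "h \<le> t" using ha by simp
  have dX': "set (leaves X2) \<inter> set (leaves X1) = {}" and dY': "set (leaves Y2) \<inter> set (leaves Y1) = {}"
    using dX dY by auto
  have sw: "Pc h m i c' (Node t X1 X2) (Node t Y1 Y2) = Pc h m i c' (Node t X2 X1) (Node t Y2 Y1)" for c'
    using Pc_swap_left[OF dX', of h m i c' t] Pc_swap_right[OF dY' ht, of m i c' "Node t X1 X2"]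
    by simp
  have memsw: "?mem x (Node t X2 X1) = ?mem x (Node t X1 X2)" for x by auto
  show ?thesis
  proof (cases "?mem m X1")
    case True then show ?thesis using case_TO[OF P1 P2 hts(1,2) True dX] by blast
  next
    case mX1: False
    show ?thesis
    proof (cases "?mem m X2")
      case True
      then show ?thesis using case_TO[OF P2 P1 hts(3,4) True dX'] sw memsw by metis
    next
      case mX2: False
      show ?thesis
      proof (cases "?mem i X1")
        case True
        then have "\<not> ?mem i X2" using dX by auto
        then show ?thesis using case_SO[OF P1 P2 mX1 True mX2] by blast
      next
        case iX1: False
        show ?thesis
        proof (cases "?mem i X2")
          case True
          then have "Pc h m i c (Node t X2 X1) (Node t Y2 Y1)" using case_SO[OF P2 P1 mX2 True mX1 iX1] by blast
          then show ?thesis using sw by blast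
        next
          case False
          then show ?thesis using case_OO[OF P1 P2 mX1 iX1 mX2 False] by blast
        qed
      qed
    qed
  qed
qed


definition RelM :: "real \<Rightarrow> nat \<Rightarrow> nat \<Rightarrow> nat multiset \<Rightarrow> real \<Rightarrow> utree list \<Rightarrow> utree list \<Rightarrow> bool" where
  "RelM h m i M a xs ys \<longleftrightarrow> (\<forall>Y\<in>set xs. hok Y \<and> ht Y \<le> a) \<and> (\<forall>Y\<in>set ys. hok Y \<and> ht Y \<le> a) \<and> h \<le> a
     \<and> mset (lvs xs) = M \<and> mset (lvs ys) = M \<and> distinct (lvs xs) \<and> m \<in> set (lvs xs) \<and> i \<in> set (lvs xs) \<and> m \<noteq> i
     \<and> (\<exists>c ys'. mset ys' = mset ys \<and> list_all2 (Pc h m i c) xs ys')"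

lemma mset_lvs_eq: "mset xs = mset ys \<Longrightarrow> mset (lvs xs) = mset (lvs ys)"
  by (simp add: mset_lvs)

lemma minmax_eq:
  fixes x y x' y' :: nat
  shows "min x y = min x' y' \<Longrightarrow> max x y = max x' y' \<Longrightarrow> {x, y} = {x', y'}"
  by (auto simp: min_def max_def split: if_splits)

lemma RelM_step:
  assumes R: "RelM h m i M a xs ys" and t: "0 < t" and l2: "2 \<le> length xs"
  shows "\<exists>\<sigma>. bij_betw \<sigma> (pairs (length xs)) (pairs (length xs)) \<and>
     (\<forall>p\<in>pairs (length xs). RelM h m i M (a + t) (merge_pair (a + t) p xs) (merge_pair (a + t) (\<sigma> p) ys))"
proof -
  let ?n = "length xs"
  let ?\<tau> = "a + t"
  from R obtain c ys' where ys': "mset ys' = mset ys" "list_all2 (Pc h m i c) xs ys'"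
    unfolding RelM_def by blast
  have Rf: "\<forall>Y\<in>set xs. hok Y \<and> ht Y \<le> a" "\<forall>Y\<in>set ys. hok Y \<and> ht Y \<le> a" "h \<le> a"
    "mset (lvs xs) = M" "mset (lvs ys) = M" "distinct (lvs xs)" "m \<in> set (lvs xs)" "i \<in> set (lvs xs)" "m \<noteq> i"
    using R unfolding RelM_def by auto
  have ly': "length ys' = ?n" using ys'(2) list_all2_lengthD by metis
  have ly: "length ys = ?n" using ys'(1) ly' mset_eq_length by metis
  obtain \<pi> where \<pi>: "\<pi> permutes {..<length ys}" "permute_list \<pi> ys = ys'"
    using mset_eq_permutation[OF ys'(1)] by blast
  have \<pi>n: "\<pi> j < ?n" if "j < ?n" for j using permutes_in_image[OF \<pi>(1)] that ly by auto
  have \<pi>inj: "inj \<pi>" using permutes_inj[OF \<pi>(1)] .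
  have ynth: "ys' ! j = ys ! \<pi> j" if "j < ?n" for j
    using permute_list_nth[OF \<pi>(1)] that ly \<pi>(2) by metis
  have sety': "set ys' = set ys" using ys'(1) by (metis set_mset_mset)
  have dys': "distinct (lvs ys')"
    using mset_lvs_eq[OF ys'(1)] Rf(4,5,6) by (metis mset_eq_imp_distinct_iff)
  define \<sigma> where "\<sigma> p = (min (\<pi> (fst p)) (\<pi> (snd p)), max (\<pi> (fst p)) (\<pi> (snd p)))" for p
  have \<sigma>in: "\<sigma> p \<in> pairs ?n" if p: "p \<in> pairs ?n" for p
  proof -
    have "fst p \<noteq> snd p" "fst p < ?n" "snd p < ?n" using pairs_mem[OF p] by auto
    then have "\<pi> (fst p) \<noteq> \<pi> (snd p)" "\<pi> (fst p) < ?n" "\<pi> (snd p) < ?n"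
      using \<pi>inj \<pi>n by (auto dest: injD)
    then show ?thesis by (auto simp: \<sigma>_def pairs_def min_def max_def)
  qed
  have \<sigma>inj: "inj_on \<sigma> (pairs ?n)"
  proof
    fix p q assume p: "p \<in> pairs ?n" and q: "q \<in> pairs ?n" and e: "\<sigma> p = \<sigma> q"
    then have "{\<pi> (fst p), \<pi> (snd p)} = {\<pi> (fst q), \<pi> (snd q)}"
      by (intro minmax_eq) (auto simp: \<sigma>_def)
    then have "\<pi> ` {fst p, snd p} = \<pi> ` {fst q, snd q}" by (simp only: image_insert image_empty)
    then have "{fst p, snd p} = {fst q, snd q}" by (simp only: inj_image_eq_iff[OF \<pi>inj])
    then show "p = q" using pairs_mem[OF p] pairs_mem[OF q]
      by (cases p, cases q) (auto simp: doubleton_eq_iff)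
  qed
  have \<sigma>bij: "bij_betw \<sigma> (pairs ?n) (pairs ?n)"
    unfolding bij_betw_def using \<sigma>inj endo_inj_surj[OF pairs_finite _ \<sigma>inj] \<sigma>in by blast
  have main: "RelM h m i M ?\<tau> (merge_pair ?\<tau> p xs) (merge_pair ?\<tau> (\<sigma> p) ys)" if p: "p \<in> pairs ?n" for p
  proof -
    obtain u v where uv: "p = (u, v)" by (cases p)
    have uvn: "u < v" "v < ?n" using pairs_mem[OF p] uv by auto
    obtain u' v' where uv': "\<sigma> p = (u', v')" by (cases "\<sigma> p")
    have p': "(u', v') \<in> pairs (length ys)" using \<sigma>in[OF p] uv' ly by simp
    have uv'cases: "(u' = \<pi> u \<and> v' = \<pi> v) \<or> (u' = \<pi> v \<and> v' = \<pi> u)"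
      using uv' uv by (auto simp: \<sigma>_def min_def max_def split: if_splits)
    have yu: "ys' ! u = ys ! \<pi> u" "ys' ! v = ys ! \<pi> v" using ynth uvn by auto
    let ?R = "filter (\<lambda>q. q \<noteq> u \<and> q \<noteq> v) [0..<?n]"
    let ?N = "Node ?\<tau> (xs ! u) (xs ! v)"
    have xs_new: "merge_pair ?\<tau> p xs = ?N # map (nth xs) ?R" unfolding uv merge_pair_alt ..
    have P1: "Pc h m i c (xs ! u) (ys' ! u)" "Pc h m i c (xs ! v) (ys' ! v)"
      using ys'(2) uvn by (auto simp: list_all2_conv_all_nth)
    have dX: "set (leaves (xs ! u)) \<inter> set (leaves (xs ! v)) = {}"
      using lvs_disjoint[OF Rf(6)] uvn by auto
    have dY: "set (leaves (ys' ! u)) \<inter> set (leaves (ys' ! v)) = {}"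
      using lvs_disjoint[OF dys'] uvn ly' by auto
    have memx: "xs ! u \<in> set xs" "xs ! v \<in> set xs" using uvn by auto
    have memy: "ys' ! u \<in> set ys" "ys' ! v \<in> set ys" using uvn ly' sety' by (auto simp del: set_mset_mset)
    obtain c' where c': "Pc h m i c' ?N (Node ?\<tau> (ys' ! u) (ys' ! v))"
      "c' \<noteq> c \<longrightarrow> m \<in> set (leaves ?N) \<and> i \<in> set (leaves ?N)"
      using Pc_merge_main[OF P1 dX dY Rf(3), of ?\<tau>] t memx memy Rf(1,2,9) by force
    have hd: "Pc h m i c' ?N (Node ?\<tau> (ys ! u') (ys ! v'))"
      using uv'cases
    proof
      assume "u' = \<pi> u \<and> v' = \<pi> v" then show ?thesis using c'(1) yu by simp
    next
      assume "u' = \<pi> v \<and> v' = \<pi> u"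
      then show ?thesis using c'(1) yu Pc_swap_right[of "ys' ! u" "ys' ! v" h ?\<tau> m i c' ?N] dY t Rf(3)
        by (simp add: Int_commute)
    qed
    define ysn where "ysn = Node ?\<tau> (ys ! u') (ys ! v') # map (nth ys') ?R"
    have "mset (map (nth ys') ?R) = mset ys' - {#ys' ! u, ys' ! v#}"
      using mset_rest[of u v ys'] uvn ly' by (metis add_diff_cancel_right')
    also have "{#ys' ! u, ys' ! v#} = {#ys ! u', ys ! v'#}"
      using uv'cases yu by (auto simp: add_mset_commute)
    finally have "mset ysn = mset (merge_pair ?\<tau> (\<sigma> p) ys)"
      unfolding ysn_def uv' mset_merge[OF p'] using ys'(1) by simp
    moreover have "list_all2 (Pc h m i c') (merge_pair ?\<tau> p xs) ysn"
      unfolding xs_new ysn_def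
    proof (rule list_all2_Cons[THEN iffD2], intro conjI hd)
      show "list_all2 (Pc h m i c') (map (nth xs) ?R) (map (nth ys') ?R)"
      proof (rule list_all2_all_nthI)
        fix k assume k: "k < length (map (nth xs) ?R)"
        let ?q = "?R ! k"
        have q: "?q \<in> set ?R" using k by (intro nth_mem) simp
        then have qn: "?q < ?n" "?q \<noteq> u" "?q \<noteq> v"
          by (simp_all only: set_filter set_upt mem_Collect_eq atLeastLessThan_iff) blast+
        have Pq: "Pc h m i c (xs ! ?q) (ys' ! ?q)" using ys'(2) qn by (auto simp: list_all2_conv_all_nth)
        have "Pc h m i c' (xs ! ?q) (ys' ! ?q)"
        proof (cases "c' = c")
          case True then show ?thesis using Pq by simp
        next
          case False
          then have mi: "m \<in> set (leaves ?N)" "i \<in> set (leaves ?N)" using c'(2) by auto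
          have "set (leaves (xs ! ?q)) \<inter> set (leaves (xs ! u)) = {}"
               "set (leaves (xs ! ?q)) \<inter> set (leaves (xs ! v)) = {}"
            using lvs_disjoint[OF Rf(6)] qn uvn by auto
          then have "m \<notin> set (leaves (xs ! ?q))" "i \<notin> set (leaves (xs ! ?q))" using mi by auto
          then show ?thesis using Pq Pc_c_indep by blast
        qed
        then show "Pc h m i c' (map (nth xs) ?R ! k) (map (nth ys') ?R ! k)" using k by simp
      qed simp
    qed
    ultimately have W: "\<exists>c ys'. mset ys' = mset (merge_pair ?\<tau> (\<sigma> p) ys) \<and> list_all2 (Pc h m i c) (merge_pair ?\<tau> p xs) ys'"
      by blast
    have px: "p \<in> pairs (length xs)" using p .
    have py: "\<sigma> p \<in> pairs (length ys)" using \<sigma>in[OF p] ly by simp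
    show ?thesis unfolding RelM_def
      using W merge_hok[OF Rf(1) t px] merge_hok[OF Rf(2) t py] Rf(3) t
        mset_lvs_merge[OF px] mset_lvs_merge[OF py] distinct_lvs_merge[OF px] set_lvs_merge[OF px] Rf
      by auto
  qed
  show ?thesis using \<sigma>bij main by blast
qed

lemma RelM_len: "RelM h m i M a xs ys \<Longrightarrow> length ys = length xs"
  unfolding RelM_def by (metis list_all2_lengthD mset_eq_length)

lemma RelM_mono: "RelM h m i M a xs ys \<Longrightarrow> a \<le> a' \<Longrightarrow> RelM h m i M a' xs ys"
  unfolding RelM_def by force

lemma Pc_ord: "m \<notin> set (leaves Y) \<Longrightarrow> i \<notin> set (leaves Y) \<Longrightarrow> Pc h m i c Y Y"
  by (simp add: Pc_def)

lemma RelM_append: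
  assumes R: "RelM h m i M a xs ys" and z: "\<forall>Y\<in>set zs. hok Y \<and> ht Y \<le> a"
    and mz: "m \<notin> set (lvs zs)" and iz: "i \<notin> set (lvs zs)" and d: "distinct (lvs (xs @ zs))"
  shows "RelM h m i (M + mset (lvs zs)) a (xs @ zs) (ys @ zs)"
    and "RelM h m i (mset (lvs zs) + M) a (zs @ xs) (zs @ ys)"
proof -
  from R obtain c ys' where ys': "mset ys' = mset ys" "list_all2 (Pc h m i c) xs ys'"
    unfolding RelM_def by blast
  have zz: "list_all2 (Pc h m i c) zs zs"
    using mz iz by (auto simp: list_all2_conv_all_nth intro!: Pc_ord dest: leaves_sub_lvs[OF nth_mem])
  have d2: "distinct (lvs (zs @ xs))" using d by auto
  show "RelM h m i (M + mset (lvs zs)) a (xs @ zs) (ys @ zs)"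
    using R z d ys' zz unfolding RelM_def
    by (auto intro!: exI[of _ c] exI[of _ "ys' @ zs"] list_all2_appendI)
  show "RelM h m i (mset (lvs zs) + M) a (zs @ xs) (zs @ ys)"
    using R z d2 ys' zz unfolding RelM_def
    by (auto intro!: exI[of _ c] exI[of _ "zs @ ys'"] list_all2_appendI)
qed

lemma Lof_low: "ht L < h \<Longrightarrow> Lof h i L = L"
  by (cases L) auto

lemma RelM_init:
  assumes hs: "\<forall>Y\<in>set xs. hok Y \<and> ht Y < h" and d: "distinct (lvs xs)"
    and p: "p < length xs" "xs ! p = Leaf m" and q: "q < length xs" "i \<in> set (leaves (xs ! q))"
    and mi: "m \<noteq> i"
  shows "RelM h m i (mset (lvs xs)) h xs xs"
proof -
  let ?L = "xs ! q"
  have pq: "p \<noteq> q" using p q mi by auto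
  have Lin: "?L \<in> set xs" using q by simp
  have hL: "hok ?L" "ht ?L < h" using hs Lin by auto
  have h0: "0 < h" using hs p by (metis ht.simps(1) nth_mem)
  have mL: "m \<notin> set (leaves ?L)"
    using lvs_disjoint[OF d p(1) q(1) pq] p by auto
  define c where "c = length (leaves ?L) - 1"
  have pos: "Suc 0 \<le> length (leaves ?L)" using length_leaves_pos[of ?L] by (simp only: Suc_le_eq)
  have lc: "length (leaves ?L) = 1 + c" using pos unfolding c_def by simp
  define ys' where "ys' = xs[p := ?L, q := Leaf m]"
  have mys: "mset ys' = mset xs" unfolding ys'_def using mset_swap[OF q(1) p(1)] p(2) by simp
  have ynth: "ys' ! j = (if j = q then Leaf m else if j = p then ?L else xs ! j)" if "j < length xs" for j
    using that p q by (simp add: ys'_def nth_list_update)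
  have sL: "1 \<le> sz ?L" using pos by (simp add: sz_def)
  have fpL: "0 \<le> fp ?L i" "fp ?L i \<le> ht ?L" using fp_nonneg fp_le_ht hL(1) by auto
  have lof: "Lof h i ?L = ?L" using Lof_low[OF hL(2)] .
  have Dv0: "0 \<le> Dv h i ?L"
  proof -
    have "(h - ht ?L) / sz ?L \<le> h - ht ?L" using hL(2) sL by (intro div_le_self_real) auto
    then show ?thesis unfolding Dv_def using fpL by linarith
  qed
  have gL: "gg i ?L t + Dv h i ?L \<le> gg m (Leaf m) t" if t: "h \<le> t" for t
  proof -
    have "gg i ?L t + Dv h i ?L = (t - h) / sz ?L + h"
      unfolding gg_def Dv_def using sz_pos[of ?L] by (simp add: field_simps)
    also have "(t - h) / sz ?L \<le> t - h" using t sL by (intro div_le_self_real) auto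
    finally show ?thesis by (simp add: gg_def sz_def)
  qed
  have P_target: "Pc h m i c (Leaf m) ?L"
    unfolding Pc_def using q(2) lc mi fpL(1) Dv0 gL hL(2) h0 lof by auto
  have P_special: "Pc h m i c ?L (Leaf m)"
    unfolding Pc_def using q(2) lc mi mL by auto
  have all: "list_all2 (Pc h m i c) xs ys'"
  proof (rule list_all2_all_nthI)
    show "length xs = length ys'" by (simp add: ys'_def)
  next
    fix j assume j: "j < length xs"
    show "Pc h m i c (xs ! j) (ys' ! j)"
    proof (cases "j = q")
      case True then show ?thesis using ynth[OF j] P_special by simp
    next
      case jq: False
      show ?thesis
      proof (cases "j = p")
        case True then show ?thesis using ynth[OF j] jq P_target p(2) by simp
      next
        case False
        have "set (leaves (xs ! j)) \<inter> set (leaves (xs ! p)) = {}"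
          using lvs_disjoint[OF d j p(1) False] .
        moreover have "set (leaves (xs ! j)) \<inter> set (leaves ?L) = {}"
          using lvs_disjoint[OF d j q(1) jq] .
        ultimately have "m \<notin> set (leaves (xs ! j))" "i \<notin> set (leaves (xs ! j))" using p(2) q(2) by auto
        then show ?thesis using ynth[OF j] jq False Pc_ord by simp
      qed
    qed
  qed
  have mem: "m \<in> set (lvs xs)" "i \<in> set (lvs xs)"
    using leaves_sub_lvs[OF nth_mem[OF p(1)]] leaves_sub_lvs[OF Lin] p(2) q(2) by auto
  show ?thesis unfolding RelM_def
    using hs d mem mi mys all by (auto intro: less_imp_le)
qed

lemma RelM_exit:
  assumes R: "RelM h m i M a xs ys" and l: "length xs \<le> 1"
  shows "ennreal (fp (hd ys) i) + ennreal (Dv h i (Lof h i (hd ys))) \<le> ennreal (fp (hd xs) m)"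
proof -
  from R obtain c ys' where ys': "mset ys' = mset ys" "list_all2 (Pc h m i c) xs ys'"
    unfolding RelM_def by blast
  have mx: "m \<in> set (lvs xs)" "i \<in> set (lvs xs)" "m \<noteq> i" using R unfolding RelM_def by auto
  obtain T where xs: "xs = [T]" using l mx(1) by (cases xs) auto
  obtain T' where ys'T: "ys' = [T']" using ys'(2) xs by (cases ys') (auto)
  have ys: "ys = [T']" using ys'(1) ys'T by (metis mset_single_iff mset.simps(1) mset.simps(2))
  have P: "Pc h m i c T T'" using ys'(2) xs ys'T by simp
  have mT: "m \<in> set (leaves T)" "i \<in> set (leaves T)" using mx xs by auto
  have TL: "T \<noteq> Leaf m" using mT mx(3) by auto
  have P': "ht T = ht T'" "h \<le> ht T" "0 \<le> fp T' i" "0 \<le> Dv h i (Lof h i T')"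
    "\<And>t. max h (max (ht T) (ht T')) \<le> t \<Longrightarrow> gg i T' t + Dv h i (Lof h i T') \<le> gg m T t"
    using P mT TL unfolding Pc_def by auto
  have "gg i T' (ht T) + Dv h i (Lof h i T') \<le> gg m T (ht T)" using P'(1,2,5) by auto
  then have "fp T' i + Dv h i (Lof h i T') \<le> fp T m" using P'(1) by (simp add: gg_def)
  then show ?thesis using xs ys P'(3,4) by (simp add: ennreal_plus[symmetric] ennreal_leI del: ennreal_plus)
qed

lemma coal_couple:
  assumes R: "RelM h m i M a xs ys" and tp: "ereal a < tp"
    and hyp: "\<And>a xs ys. RelM h m i M a xs ys \<Longrightarrow> ereal a < tp \<Longrightarrow> length xs \<le> 1 \<or> tp \<noteq> \<infinity> \<Longrightarrow> c2 ys \<le> c1 xs"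
  shows "coal (length ys) a tp c2 ys \<le> coal (length xs) a tp c1 xs"
proof -
  let ?R = "\<lambda>a xs ys. RelM h m i M a xs ys \<and> ereal a < tp"
  have ly: "length ys = length xs" using RelM_len[OF R] .
  show ?thesis unfolding ly
  proof (rule coal_sim[where R = ?R])
    show "?R a xs ys" using R tp by simp
  next
    fix a xs ys assume "?R a xs ys" then show "length ys = length xs" using RelM_len by blast
  next
    fix a xs ys t assume R': "?R a xs ys" and t: "0 < t" "ereal (a + t) < tp" and l2: "2 \<le> length xs"
    obtain \<sigma> where "bij_betw \<sigma> (pairs (length xs)) (pairs (length xs))"
      "\<forall>p\<in>pairs (length xs). RelM h m i M (a + t) (merge_pair (a + t) p xs) (merge_pair (a + t) (\<sigma> p) ys)"
      using RelM_step[OF conjunct1[OF R'] t(1) l2] by blast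
    then show "\<exists>\<sigma>. bij_betw \<sigma> (pairs (length xs)) (pairs (length xs)) \<and>
        (\<forall>p\<in>pairs (length xs). ?R (a + t) (merge_pair (a + t) p xs) (merge_pair (a + t) (\<sigma> p) ys))"
      using t by blast
  next
    fix a xs ys assume "?R a xs ys" "length xs \<le> 1 \<or> tp \<noteq> \<infinity>"
    then show "c2 ys \<le> c1 xs" using hyp by blast
  qed simp
qed

lemma gd_ht: "gd T (ereal tp) ls \<Longrightarrow> \<forall>Y\<in>set ls. hok Y \<and> ht Y < tp"
  by (simp add: gd_def)

lemma subtree_ht: "T \<in> subtrees S \<Longrightarrow> heights_ok S \<Longrightarrow> ht T \<le> ht S"
proof (induction S)
  case (Leaf x) then show ?case by simp
next
  case (Node t l r)
  show ?case
  proof (cases "T = Node t l r")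
    case True then show ?thesis by simp
  next
    case False
    then have "T \<in> subtrees l \<or> T \<in> subtrees r" using Node.prems by auto
    then show ?thesis using Node by auto
  qed
qed

lemma distinct_lvs_gd:
  assumes "mset (lvs ls) = mset (leaves T)" "distinct (leaves T)"
  shows "distinct (lvs ls)"
  using assms by (metis mset_eq_imp_distinct_iff)

lemma mem_lvs_gd:
  assumes "mset (lvs ls) = mset (leaves T)"
  shows "set (lvs ls) = set (leaves T)"
  using assms by (metis set_mset_mset)

lemma obtain_idx:
  assumes "i \<in> set (lvs ls)"
  obtains q where "q < length ls" "i \<in> set (leaves (ls ! q))"
proof -
  from assms obtain Y where "Y \<in> set ls" "i \<in> set (leaves Y)" by (auto simp: lvs_def)
  then obtain q where "q < length ls" "ls ! q = Y" by (auto simp: in_set_conv_nth)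
  then show ?thesis using that \<open>i \<in> set (leaves Y)\<close> by blast
qed

lemma mscE_couple:
  assumes T: "heights_ok T" "distinct (leaves T)" "S' \<in> subtrees T"
    and S': "S' = Node h A (Leaf m) \<or> S' = Node h (Leaf m) A" and iA: "i \<in> set (leaves A)" and mi: "m \<noteq> i"
    and tp: "ereal (ht T) < tp"
    and hyp: "\<And>a xs ys. RelM h m i (mset (leaves T)) a xs ys \<Longrightarrow> ereal a < tp \<Longrightarrow> length xs \<le> 1 \<or> tp \<noteq> \<infinity> \<Longrightarrow> c2 ys \<le> c1 xs"
  shows "mscE T tp c2 \<le> mscE T tp c1"
  using T tp hyp
proof (induction T arbitrary: tp c1 c2)
  case (Leaf x)
  then show ?case using S' by auto
next
  case (Node hp l r)
  have hl: "heights_ok l" "ht l < hp" "heights_ok r" "ht r < hp" using Node.prems(1) by auto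
  have dl: "distinct (leaves l)" "distinct (leaves r)" "set (leaves l) \<inter> set (leaves r) = {}"
    using Node.prems(2) by auto
  have htp: "ereal hp < tp" using Node.prems(4) by simp
  let ?M = "mset (leaves (Node hp l r))"
  have mS': "m \<in> set (leaves S')" "i \<in> set (leaves S')" using S' iA by auto
  show ?case
  proof (cases "S' = Node hp l r")
    case True
    have h: "hp = h" using True S' by auto
    have hA: "heights_ok A" "ereal (ht A) < ereal h" using True S' hl h by auto
    have h0: "0 < h" using True S' hl h by auto
    have couple: "coal (length xs) h tp c2 xs \<le> coal (length xs) h tp c1 xs"
      if xs: "\<forall>Y\<in>set xs. hok Y \<and> ht Y < h" "mset (lvs xs) = ?M" "p < length xs" "xs ! p = Leaf m"
      for xs p
    proof -
      have d: "distinct (lvs xs)" using distinct_lvs_gd[OF xs(2) Node.prems(2)] .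
      have "i \<in> set (lvs xs)" using mem_lvs_gd[OF xs(2)] mS' True by auto
      then obtain q where q: "q < length xs" "i \<in> set (leaves (xs ! q))" by (rule obtain_idx)
      have R: "RelM h m i ?M h xs xs" using RelM_init[OF xs(1) d xs(3,4) q mi] xs(2) by simp
      show ?thesis using coal_couple[OF R _ Node.prems(5)] htp h by simp
    qed
    from S' show ?thesis
    proof
      assume "S' = Node h A (Leaf m)"
      then have lr: "l = A" "r = Leaf m" using True by auto
      show ?thesis unfolding lr h mscE.simps(2) mscE_Leaf
      proof (rule mscE_mono_gd[OF hA], goal_cases)
        case (1 ls1)
        note g = 1
        have xs: "\<forall>Y\<in>set (ls1 @ [Leaf m]). hok Y \<and> ht Y < h" using gd_ht[OF g] h0 by auto
        have "mset (lvs (ls1 @ [Leaf m])) = ?M" using g lr by (simp add: gd_def)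
        then show ?case
          using couple[OF xs _, of "length ls1"] by simp
      qed
    next
      assume "S' = Node h (Leaf m) A"
      then have lr: "l = Leaf m" "r = A" using True by auto
      show ?thesis unfolding lr h mscE.simps(2) mscE_Leaf
      proof (rule mscE_mono_gd[OF hA], goal_cases)
        case (1 ls1)
        note g = 1
        have xs: "\<forall>Y\<in>set ([Leaf m] @ ls1). hok Y \<and> ht Y < h" using gd_ht[OF g] h0 by auto
        have "mset (lvs ([Leaf m] @ ls1)) = ?M" using g lr by (simp add: gd_def)
        then show ?case
          using couple[OF xs _, of 0] by simp
      qed
    qed
  next
    case False
    then have "S' \<in> subtrees l \<or> S' \<in> subtrees r" using Node.prems(3) by auto
    then show ?thesis
    proof
      assume Sl: "S' \<in> subtrees l"
      have mil: "m \<in> set (leaves l)" "i \<in> set (leaves l)" using subtrees_leaves[OF Sl] mS' by auto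
      show ?thesis unfolding mscE.simps
      proof (rule Node.IH(1)[OF hl(1) dl(1) Sl])
        show "ereal (ht l) < ereal hp" using hl by simp
      next
        fix a xs ys assume R: "RelM h m i (mset (leaves l)) a xs ys" and a: "ereal a < ereal hp"
        show "mscE r (ereal hp) (\<lambda>ls2. coal (length (ys @ ls2)) hp tp c2 (ys @ ls2))
            \<le> mscE r (ereal hp) (\<lambda>ls2. coal (length (xs @ ls2)) hp tp c1 (xs @ ls2))"
        proof (rule mscE_mono_gd[OF hl(3)])
          fix ls2 assume g: "gd r (ereal hp) ls2"
          have z: "\<forall>Y\<in>set ls2. hok Y \<and> ht Y \<le> hp" using gd_ht[OF g] by (auto intro: less_imp_le)
          have lz: "set (lvs ls2) = set (leaves r)" using g by (simp add: gd_def mem_lvs_gd)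
          have mz: "m \<notin> set (lvs ls2)" "i \<notin> set (lvs ls2)" using lz mil dl(3) by auto
          have Rm: "RelM h m i (mset (leaves l)) hp xs ys" using RelM_mono[OF R] a by simp
          have mx: "mset (lvs xs) = mset (leaves l)" using R by (simp add: RelM_def)
          have d: "distinct (lvs (xs @ ls2))"
            using distinct_lvs_gd[of "xs @ ls2" "Node hp l r"] mx g Node.prems(2) by (simp add: gd_def)
          have R2: "RelM h m i ?M hp (xs @ ls2) (ys @ ls2)"
            using RelM_append(1)[OF Rm z mz d] g by (simp add: gd_def)
          show "coal (length (ys @ ls2)) hp tp c2 (ys @ ls2) \<le> coal (length (xs @ ls2)) hp tp c1 (xs @ ls2)"
            by (rule coal_couple[OF R2 htp Node.prems(5)])
        qed (use hl in auto)
      qed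
    next
      assume Sr: "S' \<in> subtrees r"
      have mir: "m \<in> set (leaves r)" "i \<in> set (leaves r)" using subtrees_leaves[OF Sr] mS' by auto
      show ?thesis unfolding mscE.simps
      proof (rule mscE_mono_gd[OF hl(1)])
        show "ereal (ht l) < ereal hp" using hl by simp
      next
        fix ls1 assume g: "gd l (ereal hp) ls1"
        show "mscE r (ereal hp) (\<lambda>ls2. coal (length (ls1 @ ls2)) hp tp c2 (ls1 @ ls2))
            \<le> mscE r (ereal hp) (\<lambda>ls2. coal (length (ls1 @ ls2)) hp tp c1 (ls1 @ ls2))"
        proof (rule Node.IH(2)[OF hl(3) dl(2) Sr])
          show "ereal (ht r) < ereal hp" using hl by simp
        next
          fix a xs ys assume R: "RelM h m i (mset (leaves r)) a xs ys" and a: "ereal a < ereal hp"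
          have z: "\<forall>Y\<in>set ls1. hok Y \<and> ht Y \<le> hp" using gd_ht[OF g] by (auto intro: less_imp_le)
          have lz: "set (lvs ls1) = set (leaves l)" using g by (simp add: gd_def mem_lvs_gd)
          have mz: "m \<notin> set (lvs ls1)" "i \<notin> set (lvs ls1)" using lz mir dl(3) by auto
          have Rm: "RelM h m i (mset (leaves r)) hp xs ys" using RelM_mono[OF R] a by simp
          have mx: "mset (lvs xs) = mset (leaves r)" using R by (simp add: RelM_def)
          have d: "distinct (lvs (xs @ ls1))"
            using distinct_lvs_gd[of "xs @ ls1" "Node hp r l"] mx g Node.prems(2) by (auto simp: gd_def)
          have R2: "RelM h m i ?M hp (ls1 @ xs) (ls1 @ ys)"
            using RelM_append(2)[OF Rm z mz d] g by (simp add: gd_def)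
          show "coal (length (ls1 @ ys)) hp tp c2 (ls1 @ ys) \<le> coal (length (ls1 @ xs)) hp tp c1 (ls1 @ xs)"
            by (rule coal_couple[OF R2 htp Node.prems(5)])
        qed
      qed
    qed
  qed
qed

definition Qz :: "real \<Rightarrow> nat \<Rightarrow> real \<Rightarrow> utree list \<Rightarrow> bool" where
  "Qz h i z ls \<longleftrightarrow> (\<exists>Y\<in>set ls. i \<in> set (leaves Y) \<and> z \<le> Dv h i (Lof h i Y))"

lemma Qz_append: "Qz h i z xs \<Longrightarrow> Qz h i z (xs @ ys)" "Qz h i z xs \<Longrightarrow> Qz h i z (ys @ xs)"
  by (auto simp: Qz_def)

lemma Qz_merge:
  assumes Q: "Qz h i z xs" and d: "distinct (lvs xs)" and ha: "h \<le> a" and t: "0 < t"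
    and p: "p \<in> pairs (length xs)"
  shows "Qz h i z (merge_pair (a + t) p xs)"
proof -
  obtain Y where Y: "Y \<in> set xs" "i \<in> set (leaves Y)" "z \<le> Dv h i (Lof h i Y)"
    using Q by (auto simp: Qz_def)
  obtain u v where uv: "p = (u, v)" by (cases p)
  have uvn: "u < v" "v < length xs" using pairs_mem[OF p] uv by auto
  let ?N = "Node (a + t) (xs ! u) (xs ! v)"
  have Nin: "?N \<in> set (merge_pair (a + t) p xs)" unfolding uv merge_pair_alt by simp
  show ?thesis
  proof (cases "Y = xs ! u")
    case True
    have "Lof h i ?N = Lof h i Y" using True Y ha t by auto
    then show ?thesis using Nin Y True unfolding Qz_def by (intro bexI[of _ ?N]) auto
  next
    case yu: False
    show ?thesis
    proof (cases "Y = xs ! v")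
      case True
      have "set (leaves (xs ! u)) \<inter> set (leaves (xs ! v)) = {}" using lvs_disjoint[OF d] uvn by auto
      then have "i \<notin> set (leaves (xs ! u))" using True Y by auto
      then have "Lof h i ?N = Lof h i Y" using True Y ha t by auto
      then show ?thesis using Nin Y True unfolding Qz_def by (intro bexI[of _ ?N]) auto
    next
      case False
      have "Y \<in> set (merge_pair (a + t) p xs)" using set_merge2[OF p Y(1)] yu False uv by auto
      then show ?thesis using Y unfolding Qz_def by blast
    qed
  qed
qed

definition \<nu>f :: "nat \<Rightarrow> real \<Rightarrow> ereal \<Rightarrow> real" where
  "\<nu>f N a tp = (if tp = \<infinity> then exp (- 2 * real (N * N) * real N) else exp (- real (N * N) * (real_of_ereal tp - a)))"

lemma \<nu>f_pos: "0 < \<nu>f N a tp" by (simp add: \<nu>f_def)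

lemma coal_Q:
  assumes xs: "\<forall>Y\<in>set xs. hok Y \<and> ht Y \<le> a" "mset (lvs xs) = mset (leaves T)" "distinct (leaves T)"
    and ha: "h \<le> a" and tp: "ereal a < tp" and Q: "Qz h i z xs"
    and hyp: "\<forall>ls. gd T tp ls \<and> Qz h i z ls \<and> (tp = \<infinity> \<longrightarrow> length ls \<le> 1) \<longrightarrow> \<kappa> \<le> c ls"
  shows "ennreal (\<nu>f (length (leaves T)) a tp) * \<kappa> \<le> coal (length xs) a tp c xs"
proof -
  let ?N = "length (leaves T)"
  have lenN: "length xs \<le> ?N" using mset_lvs_length[OF xs(2)] by simp
  show ?thesis
  proof (cases "tp = \<infinity>")
    case True
    let ?I = "\<lambda>a xs. CI (mset (leaves T)) a xs \<and> Qz h i z xs \<and> h \<le> a"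
    have "ennreal (exp (- 2 * real (?N * ?N) * real (length xs))) * \<kappa> \<le> coal (length xs) a \<infinity> c xs"
    proof (rule coal_ge_root[where I = ?I])
      show "?I a xs" using xs ha Q by (simp add: CI_def)
    next
      fix a xs and t :: real and p assume I: "?I a xs" and t: "0 < t" and p: "p \<in> pairs (length xs)"
      have d: "distinct (lvs xs)" using I xs(3) distinct_lvs_gd by (auto simp: CI_def)
      show "?I (a + t) (merge_pair (a + t) p xs)"
        using CI_merge[OF conjunct1[OF I] t p] Qz_merge[OF _ d _ t p] I t by auto
    next
      fix a xs assume "?I a xs"
      then have "mset (lvs xs) = mset (leaves T)" by (simp add: CI_def)
      from mset_lvs_length[OF this] show "length xs \<le> ?N" by simp
    next
      fix a xs assume I: "?I a xs" and l: "length xs \<le> 1"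
      have "gd T tp xs" using I True by (auto simp: gd_def CI_def)
      then show "\<kappa> \<le> c xs" using hyp I l True by blast
    qed simp
    moreover have r: "exp (- 2 * real (?N * ?N) * real ?N) \<le> exp (- 2 * real (?N * ?N) * real (length xs))"
      using lenN by (auto intro!: mult_left_mono)
    have "ennreal (exp (- 2 * real (?N * ?N) * real ?N)) * \<kappa> \<le> ennreal (exp (- 2 * real (?N * ?N) * real (length xs))) * \<kappa>"
      by (rule mult_right_mono[OF ennreal_leI[OF r]]) simp
    ultimately show ?thesis unfolding \<nu>f_def using True
      by (simp del: ennreal_mult_le_mult_iff)
  next
    case False
    then obtain \<beta> where \<beta>: "tp = ereal \<beta>" using tp by (cases tp) auto
    have a\<beta>: "a < \<beta>" using tp \<beta> by simp
    have g: "gd T tp xs" using xs \<beta> a\<beta> by (auto simp: gd_def)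
    have "ennreal (exp (- real (?N * ?N) * (\<beta> - a))) * \<kappa> \<le> ennreal (exp (- lamf (length xs) * (\<beta> - a))) * c xs"
      using hyp g Q False exp_lamf_ge[OF lenN, of "\<beta> - a"] a\<beta>
      by (intro mult_mono) (auto intro: ennreal_leI)
    also have "\<dots> \<le> coal (length xs) a (ereal \<beta>) c xs" using a\<beta> by (intro coal_nocoal) auto
    finally show ?thesis unfolding \<nu>f_def using \<beta> by simp
  qed
qed

lemma coal_event:
  assumes l2: "2 \<le> length xs" and lN: "length xs \<le> N" and p0: "p0 \<in> pairs (length xs)"
    and \<alpha>: "0 < \<alpha>1" "\<alpha>1 \<le> \<alpha>2" "a + \<alpha>2 < \<beta>"
    and K: "\<And>t. \<alpha>1 \<le> t \<Longrightarrow> t \<le> \<alpha>2 \<Longrightarrow> K \<le> c (merge_pair (a + t) p0 xs)"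
  shows "ennreal ((\<alpha>2 - \<alpha>1) * (exp (- real (N * N) * (\<beta> - a)) * (1 / real (N * N)) * exp (- real (N * N) * (\<beta> - a)))) * K
    \<le> coal (Suc k) a (ereal \<beta>) c xs"
proof -
  let ?n = "length xs"
  let ?l = "lamf ?n"
  let ?E = "exp (- real (N * N) * (\<beta> - a))"
  let ?w = "ennreal (1 / real (card (pairs ?n)))"
  let ?C = "ennreal (?E * (1 / real (N * N)) * ?E) * K"
  have l1: "1 \<le> ?l" using lamf_ge1[OF l2] .
  have lN': "?l \<le> real (N * N)" using lamf_le[OF lN] .
  have N2: "2 \<le> N" using l2 lN by simp
  have NN: "0 < real (N * N)" using N2 by simp
  have "(\<integral>\<^sup>+ t. ?C * indicator {\<alpha>1..\<alpha>2} t \<partial>lborel) \<le>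
      (\<integral>\<^sup>+ t. indicator {t. 0 < t \<and> ereal (a + t) < ereal \<beta>} t * ennreal (?l * exp (- ?l * t)) *
          (\<Sum>p\<in>pairs ?n. ?w * coal k (a + t) (ereal \<beta>) c (merge_pair (a + t) p xs)) \<partial>lborel)"
  proof (intro nn_integral_mono)
    fix t :: real
    show "?C * indicator {\<alpha>1..\<alpha>2} t \<le> indicator {t. 0 < t \<and> ereal (a + t) < ereal \<beta>} t * ennreal (?l * exp (- ?l * t)) *
          (\<Sum>p\<in>pairs ?n. ?w * coal k (a + t) (ereal \<beta>) c (merge_pair (a + t) p xs))"
    proof (cases "t \<in> {\<alpha>1..\<alpha>2}")
      case True
      then have t: "0 < t" "a + t < \<beta>" "\<alpha>1 \<le> t" "t \<le> \<alpha>2" using \<alpha> by auto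
      have e1: "?E \<le> ?l * exp (- ?l * t)"
      proof -
        have "?l * t \<le> real (N * N) * (\<beta> - a)"
          using lN' t by (intro mult_mono) auto
        then have "?E \<le> exp (- ?l * t)" by simp
        also have "\<dots> \<le> ?l * exp (- ?l * t)" using l1 by simp
        finally show ?thesis .
      qed
      have mlen: "length (merge_pair (a + t) p0 xs) \<le> N" using length_merge[OF p0] lN by simp
      have e2: "?E \<le> exp (- lamf (length (merge_pair (a + t) p0 xs)) * (\<beta> - (a + t)))"
      proof -
        have "lamf (length (merge_pair (a + t) p0 xs)) * (\<beta> - (a + t)) \<le> real (N * N) * (\<beta> - a)"
          using lamf_le[OF mlen] lamf_nonneg t by (intro mult_mono) auto
        then show ?thesis by simp
      qed
      have "ennreal ?E * K \<le> ennreal (exp (- lamf (length (merge_pair (a + t) p0 xs)) * (\<beta> - (a + t)))) * c (merge_pair (a + t) p0 xs)"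
        using e2 K[OF t(3,4)] by (intro mult_mono) (auto intro: ennreal_leI)
      also have "\<dots> \<le> coal k (a + t) (ereal \<beta>) c (merge_pair (a + t) p0 xs)"
        using t by (intro coal_nocoal) auto
      finally have c1: "ennreal ?E * K \<le> coal k (a + t) (ereal \<beta>) c (merge_pair (a + t) p0 xs)" .
      have cardle: "real (card (pairs ?n)) \<le> real (N * N)"
        using pairs_card_le[of ?n] lN by (metis le_trans mult_le_mono of_nat_le_iff)
      have cardpos: "0 < real (card (pairs ?n))" using pairs_card_pos[OF l2] by simp
      have w: "ennreal (1 / real (N * N)) \<le> ?w"
        using cardle cardpos by (intro ennreal_leI) (simp add: frac_le)
      have "ennreal (1 / real (N * N)) * (ennreal ?E * K) \<le> ?w * coal k (a + t) (ereal \<beta>) c (merge_pair (a + t) p0 xs)"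
        using w c1 by (intro mult_mono) auto
      also have "\<dots> \<le> (\<Sum>p\<in>pairs ?n. ?w * coal k (a + t) (ereal \<beta>) c (merge_pair (a + t) p xs))"
        using p0 by (intro member_le_sum) auto
      finally have s: "ennreal (1 / real (N * N)) * (ennreal ?E * K) \<le> (\<Sum>p\<in>pairs ?n. ?w * coal k (a + t) (ereal \<beta>) c (merge_pair (a + t) p xs))" .
      have m1: "ennreal (?E * (1 / real (N * N)) * ?E) = ennreal (?E * (1 / real (N * N))) * ennreal ?E"
        by (rule ennreal_mult) (use NN in auto)
      have m2: "ennreal (?E * (1 / real (N * N))) = ennreal ?E * ennreal (1 / real (N * N))"
        by (rule ennreal_mult) (use NN in auto)
      have "?C = ennreal ?E * (ennreal (1 / real (N * N)) * (ennreal ?E * K))"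
        unfolding m1 m2 by (simp only: mult_ac)
      also have "\<dots> \<le> ennreal (?l * exp (- ?l * t)) * (\<Sum>p\<in>pairs ?n. ?w * coal k (a + t) (ereal \<beta>) c (merge_pair (a + t) p xs))"
        using e1 s by (intro mult_mono) (auto intro: ennreal_leI)
      finally show ?thesis using True t by (simp add: mult.assoc)
    qed auto
  qed
  also have "(\<integral>\<^sup>+ t. ?C * indicator {\<alpha>1..\<alpha>2} t \<partial>lborel) = ?C * ennreal (\<alpha>2 - \<alpha>1)"
    by (subst nn_integral_cmult_indicator) (use \<alpha> in auto)
  finally have J: "?C * ennreal (\<alpha>2 - \<alpha>1) \<le> (\<integral>\<^sup>+ t. indicator {t. 0 < t \<and> ereal (a + t) < ereal \<beta>} t * ennreal (?l * exp (- ?l * t)) *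
          (\<Sum>p\<in>pairs ?n. ?w * coal k (a + t) (ereal \<beta>) c (merge_pair (a + t) p xs)) \<partial>lborel)" .
  have m3: "ennreal ((\<alpha>2 - \<alpha>1) * (?E * (1 / real (N * N)) * ?E)) = ennreal (\<alpha>2 - \<alpha>1) * ennreal (?E * (1 / real (N * N)) * ?E)"
    by (rule ennreal_mult) (use \<alpha> NN in auto)
  have eq: "ennreal ((\<alpha>2 - \<alpha>1) * (?E * (1 / real (N * N)) * ?E)) * K = ?C * ennreal (\<alpha>2 - \<alpha>1)"
    unfolding m3 by (simp only: mult_ac)
  show ?thesis unfolding eq coal_Suc_ge2[OF l2] using J by (rule order_trans) simp
qed

lemma Dv_event:
  assumes "i \<notin> set (leaves V)" "\<tau> < h" "0 \<le> \<tau>"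
  shows "(h - \<tau>) / 2 \<le> Dv h i (Lof h i (Node \<tau> (Leaf i) V))"
    and "(h - \<tau>) / 2 \<le> Dv h i (Lof h i (Node \<tau> V (Leaf i)))"
proof -
  have s: "2 \<le> 1 + real (length (leaves V))" using length_leaves_pos[of V] by linarith
  have "(h - \<tau>) / (1 + real (length (leaves V))) \<le> (h - \<tau>) / 2"
    using s assms by (intro divide_left_mono) auto
  then have *: "(h - \<tau>) / 2 \<le> h - (h - \<tau>) / (1 + real (length (leaves V))) - \<tau>"
    by (smt (verit) field_sum_of_halves)
  show "(h - \<tau>) / 2 \<le> Dv h i (Lof h i (Node \<tau> (Leaf i) V))"
    using * assms by (simp add: Dv_def sz_def)
  show "(h - \<tau>) / 2 \<le> Dv h i (Lof h i (Node \<tau> V (Leaf i)))"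
    using * assms by (simp add: Dv_def sz_def add.commute)
qed

lemma hok_ht_ge0: "heights_ok T \<Longrightarrow> 0 \<le> ht T"
  using hok_ht_nonneg heights_ok_hok by blast

lemma pos_A:
  assumes "heights_ok T" "distinct (leaves T)" "i \<in> set (leaves T)" "T \<noteq> Leaf i" "ht T < tp" "tp \<le> h"
  shows "\<exists>z>0. \<exists>\<mu>>0. \<forall>c \<kappa>. (\<forall>ls. gd T (ereal tp) ls \<and> Qz h i z ls \<longrightarrow> \<kappa> \<le> c ls) \<longrightarrow> ennreal \<mu> * \<kappa> \<le> mscE T (ereal tp) c"
  using assms
proof (induction T arbitrary: tp)
  case (Leaf x) then show ?case by auto
next
  case (Node hw l r)
  have hl: "heights_ok l" "ht l < hw" "heights_ok r" "ht r < hw" using Node.prems(1) by auto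
  have dl: "distinct (leaves l)" "distinct (leaves r)" "set (leaves l) \<inter> set (leaves r) = {}"
    using Node.prems(2) by auto
  have hw: "hw < tp" using Node.prems(5) by simp
  have tph: "tp \<le> h" using Node.prems(6) .
  have hw0: "0 \<le> hw" using hok_ht_ge0[OF hl(1)] hl(2) by simp
  let ?T = "Node hw l r"
  let ?N = "length (leaves ?T)"
  let ?\<delta> = "tp - hw"
  let ?E = "exp (- real (?N * ?N) * ?\<delta>)"
  have Ne: "?N = length (leaves l) + length (leaves r)" by simp
  have N2: "2 \<le> ?N" using length_leaves_pos[of l] length_leaves_pos[of r] unfolding Ne by linarith
  have NN: "0 < real (?N * ?N)" using N2 by simp
  define C0 where "C0 = (?\<delta> / 2 - ?\<delta> / 4) * (?E * (1 / real (?N * ?N)) * ?E)"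
  have C0: "0 < C0" unfolding C0_def using hw NN by (intro mult_pos_pos) auto
  have gdT: "gd ?T (ereal tp) (ls1 @ ls2)" if "gd l (ereal hw) ls1" "gd r (ereal hw) ls2" for ls1 ls2
    using that hw by (auto simp: gd_def intro: less_trans)
  have lenT: "length xs \<le> ?N" if "mset (lvs xs) = mset (leaves ?T)" for xs
    using mset_lvs_length[OF that] by simp
  have EV: "ennreal C0 * \<kappa> \<le> coal (Suc k) hw (ereal tp) c xs"
    if xs: "\<forall>Y\<in>set xs. hok Y \<and> ht Y \<le> hw" "mset (lvs xs) = mset (leaves ?T)" "2 \<le> length xs"
      and p0: "p0 \<in> pairs (length xs)"
      and Dv: "\<And>\<tau>. hw < \<tau> \<Longrightarrow> \<tau> \<le> hw + ?\<delta> / 2 \<Longrightarrow>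
          i \<in> set (leaves (Node \<tau> (xs ! fst p0) (xs ! snd p0))) \<and> ?\<delta> / 4 \<le> Dv h i (Lof h i (Node \<tau> (xs ! fst p0) (xs ! snd p0)))"
      and hyp: "\<forall>ls. gd ?T (ereal tp) ls \<and> Qz h i (?\<delta> / 4) ls \<longrightarrow> \<kappa> \<le> c ls"
    for xs p0 k c \<kappa>
    unfolding C0_def
  proof (rule coal_event[OF xs(3) lenT[OF xs(2)] p0])
    show "0 < ?\<delta> / 4" "?\<delta> / 4 \<le> ?\<delta> / 2" "hw + ?\<delta> / 2 < tp" using hw by (simp_all add: field_simps)
  next
    fix t assume t: "?\<delta> / 4 \<le> t" "t \<le> ?\<delta> / 2"
    have t0: "0 < t" using t hw by auto
    let ?M = "merge_pair (hw + t) p0 xs"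
    have g: "gd ?T (ereal tp) ?M"
      using merge_hok[OF xs(1) t0 p0] mset_lvs_merge[OF p0] xs(2) t hw
      by (auto simp: gd_def)
    have hdin: "Node (hw + t) (xs ! fst p0) (xs ! snd p0) \<in> set ?M"
      by (cases p0) (simp add: merge_pair_alt)
    have c1: "hw < hw + t" using t0 by simp
    have c2: "hw + t \<le> hw + ?\<delta> / 2" using t by simp
    have D: "i \<in> set (leaves (Node (hw + t) (xs ! fst p0) (xs ! snd p0))) \<and>
        ?\<delta> / 4 \<le> Dv h i (Lof h i (Node (hw + t) (xs ! fst p0) (xs ! snd p0)))"
      by (rule Dv[OF c1 c2])
    have "Qz h i (?\<delta> / 4) ?M" unfolding Qz_def using hdin D by blast
    then show "\<kappa> \<le> c ?M" using hyp g by blast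
  qed
  have NC: "ennreal ?E * \<kappa> \<le> coal (length (ls1 @ ls2)) hw (ereal tp) c (ls1 @ ls2)"
    if g: "gd l (ereal hw) ls1" "gd r (ereal hw) ls2" and Q: "Qz h i z (ls1 @ ls2)"
      and hyp: "\<forall>ls. gd ?T (ereal tp) ls \<and> Qz h i z ls \<longrightarrow> \<kappa> \<le> c ls"
    for ls1 ls2 z c \<kappa>
  proof -
    have gT: "gd ?T (ereal tp) (ls1 @ ls2)" using gdT[OF g] .
    have "mset (lvs (ls1 @ ls2)) = mset (leaves ?T)" using gT by (simp only: gd_def)
    then have len: "length (ls1 @ ls2) \<le> ?N" by (rule lenT)
    have "ennreal ?E * \<kappa> \<le> ennreal (exp (- lamf (length (ls1 @ ls2)) * (tp - hw))) * c (ls1 @ ls2)"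
      using hyp gT Q exp_lamf_ge[OF len, of "tp - hw"] hw
      by (intro mult_mono) (auto intro: ennreal_leI)
    also have "\<dots> \<le> coal (length (ls1 @ ls2)) hw (ereal tp) c (ls1 @ ls2)"
      using hw by (intro coal_nocoal) auto
    finally show ?thesis .
  qed
  have notin: "i \<notin> set (leaves V)" if "V \<in> set ls" "gd X (ereal hw) ls" "i \<notin> set (leaves X)" for V ls X
    using leaves_sub_lvs[OF that(1)] that(2,3) mem_lvs_gd by (auto simp: gd_def)
  show ?case
  proof (cases "l = Leaf i")
    case True
    obtain \<mu>r where \<mu>r: "\<mu>r > 0" "\<forall>c \<kappa>. (\<forall>ls. gd r (ereal hw) ls \<longrightarrow> \<kappa> \<le> c ls) \<longrightarrow> ennreal \<mu>r * \<kappa> \<le> mscE r (ereal hw) c"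
      using mscE_ge_mass[OF hl(3,4)] by blast
    have ir: "i \<notin> set (leaves r)" using dl(3) True by auto
    show ?thesis
    proof (rule exI[of _ "?\<delta> / 4"], intro conjI exI[of _ "\<mu>r * C0"] allI impI)
      show "0 < ?\<delta> / 4" "0 < \<mu>r * C0" using hw \<mu>r C0 by auto
      fix c and \<kappa> :: ennreal assume hyp: "\<forall>ls. gd ?T (ereal tp) ls \<and> Qz h i (?\<delta> / 4) ls \<longrightarrow> \<kappa> \<le> c ls"
      have "ennreal \<mu>r * (ennreal C0 * \<kappa>) \<le> mscE ?T (ereal tp) c"
        unfolding True mscE.simps(2) mscE_Leaf
      proof (rule \<mu>r(2)[rule_format])
        fix ls2 assume g: "gd r (ereal hw) ls2"
        have ne: "ls2 \<noteq> []" using gd_ne[OF g] .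
        let ?xs = "[Leaf i] @ ls2"
        have xs1: "\<forall>Y\<in>set ?xs. hok Y \<and> ht Y \<le> hw" using gd_ht[OF g] hw0 by (auto intro: less_imp_le)
        have xs2: "mset (lvs ?xs) = mset (leaves ?T)" using g True by (simp add: gd_def)
        have xs3: "2 \<le> length ?xs" using ne by (cases ls2) auto
        have p0: "(0, 1) \<in> pairs (length ?xs)" using pairs_01[OF xs3] .
        have V: "i \<notin> set (leaves (ls2 ! 0))" using notin[OF _ g ir] ne by simp
        have "ennreal C0 * \<kappa> \<le> coal (Suc (length ls2)) hw (ereal tp) c ?xs"
        proof (rule EV[OF xs1 xs2 xs3 p0 _ hyp])
          fix \<tau> assume \<tau>: "hw < \<tau>" "\<tau> \<le> hw + ?\<delta> / 2"
            have hm: "hw + ?\<delta> / 2 < tp" using hw by (simp add: field_simps)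
          have \<tau>h: "\<tau> < h" using \<tau> hm tph by linarith
          have \<tau>0: "0 \<le> \<tau>" using \<tau> hw0 by linarith
          have "(h - \<tau>) / 2 \<le> Dv h i (Lof h i (Node \<tau> (Leaf i) (ls2 ! 0)))"
            by (rule Dv_event(1)[OF V \<tau>h \<tau>0])
          moreover have "?\<delta> / 4 \<le> (h - \<tau>) / 2" using \<tau> tph by (simp add: field_simps)
          ultimately show "i \<in> set (leaves (Node \<tau> (?xs ! fst (0, 1)) (?xs ! snd (0, 1)))) \<and>
              ?\<delta> / 4 \<le> Dv h i (Lof h i (Node \<tau> (?xs ! fst (0, 1)) (?xs ! snd (0, 1))))"
            using ne by (cases ls2) auto
        qed
        then show "ennreal C0 * \<kappa> \<le> coal (length ([Leaf i] @ ls2)) hw (ereal tp) c ([Leaf i] @ ls2)"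
          by simp
      qed
      then show "ennreal (\<mu>r * C0) * \<kappa> \<le> mscE ?T (ereal tp) c"
        using \<mu>r C0 by (simp add: ennreal_mult mult.assoc)
    qed
  next
    case lnot: False
    show ?thesis
    proof (cases "r = Leaf i")
      case True
      obtain \<mu>l where \<mu>l: "\<mu>l > 0" "\<forall>c \<kappa>. (\<forall>ls. gd l (ereal hw) ls \<longrightarrow> \<kappa> \<le> c ls) \<longrightarrow> ennreal \<mu>l * \<kappa> \<le> mscE l (ereal hw) c"
        using mscE_ge_mass[OF hl(1,2)] by blast
      have il: "i \<notin> set (leaves l)" using dl(3) True by auto
      show ?thesis
      proof (rule exI[of _ "?\<delta> / 4"], intro conjI exI[of _ "\<mu>l * C0"] allI impI)
        show "0 < ?\<delta> / 4" "0 < \<mu>l * C0" using hw \<mu>l C0 by auto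
        fix c and \<kappa> :: ennreal assume hyp: "\<forall>ls. gd ?T (ereal tp) ls \<and> Qz h i (?\<delta> / 4) ls \<longrightarrow> \<kappa> \<le> c ls"
        have "ennreal \<mu>l * (ennreal C0 * \<kappa>) \<le> mscE ?T (ereal tp) c"
          unfolding True mscE.simps(2) mscE_Leaf
        proof (rule \<mu>l(2)[rule_format])
          fix ls1 assume g: "gd l (ereal hw) ls1"
          have ne: "ls1 \<noteq> []" using gd_ne[OF g] .
          let ?xs = "ls1 @ [Leaf i]"
          have xs1: "\<forall>Y\<in>set ?xs. hok Y \<and> ht Y \<le> hw" using gd_ht[OF g] hw0 by (auto intro: less_imp_le)
          have xs2: "mset (lvs ?xs) = mset (leaves ?T)" using g True by (simp add: gd_def)
          have xs3: "2 \<le> length ?xs" using ne by (cases ls1) auto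
          have p0: "(0, length ls1) \<in> pairs (length ?xs)" using ne by (auto simp: pairs_def)
          have V: "i \<notin> set (leaves (ls1 ! 0))" using notin[OF _ g il] ne by simp
          have e: "?xs ! 0 = ls1 ! 0" "?xs ! length ls1 = Leaf i" using ne by (auto simp: nth_append)
          have "ennreal C0 * \<kappa> \<le> coal (Suc (length ls1)) hw (ereal tp) c ?xs"
          proof (rule EV[OF xs1 xs2 xs3 p0 _ hyp])
            fix \<tau> assume \<tau>: "hw < \<tau>" "\<tau> \<le> hw + ?\<delta> / 2"
            have hm: "hw + ?\<delta> / 2 < tp" using hw by (simp add: field_simps)
            have \<tau>h: "\<tau> < h" using \<tau> hm tph by linarith
            have \<tau>0: "0 \<le> \<tau>" using \<tau> hw0 by linarith
            have "(h - \<tau>) / 2 \<le> Dv h i (Lof h i (Node \<tau> (ls1 ! 0) (Leaf i)))"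
              by (rule Dv_event(2)[OF V \<tau>h \<tau>0])
            moreover have "?\<delta> / 4 \<le> (h - \<tau>) / 2" using \<tau> tph by (simp add: field_simps)
            ultimately show "i \<in> set (leaves (Node \<tau> (?xs ! fst (0, length ls1)) (?xs ! snd (0, length ls1)))) \<and>
                ?\<delta> / 4 \<le> Dv h i (Lof h i (Node \<tau> (?xs ! fst (0, length ls1)) (?xs ! snd (0, length ls1))))"
              using e by simp
          qed
          then show "ennreal C0 * \<kappa> \<le> coal (length (ls1 @ [Leaf i])) hw (ereal tp) c (ls1 @ [Leaf i])"
            by simp
        qed
        then show "ennreal (\<mu>l * C0) * \<kappa> \<le> mscE ?T (ereal tp) c"
          using \<mu>l C0 by (simp add: ennreal_mult mult.assoc)
      qed
    next
      case rnot: False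
      show ?thesis
      proof (cases "i \<in> set (leaves l)")
        case True
        obtain z \<mu>l where z: "z > 0" "\<mu>l > 0"
          "\<forall>c \<kappa>. (\<forall>ls. gd l (ereal hw) ls \<and> Qz h i z ls \<longrightarrow> \<kappa> \<le> c ls) \<longrightarrow> ennreal \<mu>l * \<kappa> \<le> mscE l (ereal hw) c"
          using Node.IH(1)[OF hl(1) dl(1) True lnot hl(2)] hw tph by force
        obtain \<mu>r where \<mu>r: "\<mu>r > 0" "\<forall>c \<kappa>. (\<forall>ls. gd r (ereal hw) ls \<longrightarrow> \<kappa> \<le> c ls) \<longrightarrow> ennreal \<mu>r * \<kappa> \<le> mscE r (ereal hw) c"
          using mscE_ge_mass[OF hl(3,4)] by blast
        show ?thesis
        proof (rule exI[of _ z], intro conjI exI[of _ "\<mu>l * (\<mu>r * ?E)"] allI impI)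
          show "0 < z" "0 < \<mu>l * (\<mu>r * ?E)" using z \<mu>r by auto
          fix c and \<kappa> :: ennreal assume hyp: "\<forall>ls. gd ?T (ereal tp) ls \<and> Qz h i z ls \<longrightarrow> \<kappa> \<le> c ls"
          have "ennreal \<mu>l * (ennreal \<mu>r * (ennreal ?E * \<kappa>)) \<le> mscE ?T (ereal tp) c"
            unfolding mscE.simps(2)
          proof (rule z(3)[rule_format])
            fix ls1 assume g1: "gd l (ereal hw) ls1 \<and> Qz h i z ls1"
            show "ennreal \<mu>r * (ennreal ?E * \<kappa>) \<le> mscE r (ereal hw) (\<lambda>ls2. coal (length (ls1 @ ls2)) hw (ereal tp) c (ls1 @ ls2))"
            proof (rule \<mu>r(2)[rule_format])
              fix ls2 assume g2: "gd r (ereal hw) ls2"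
              show "ennreal ?E * \<kappa> \<le> coal (length (ls1 @ ls2)) hw (ereal tp) c (ls1 @ ls2)"
                using NC[OF conjunct1[OF g1] g2 Qz_append(1)[OF conjunct2[OF g1]] hyp] .
            qed
          qed
          then show "ennreal (\<mu>l * (\<mu>r * ?E)) * \<kappa> \<le> mscE ?T (ereal tp) c"
            using z \<mu>r by (simp add: ennreal_mult mult.assoc)
        qed
      next
        case False
        then have ir: "i \<in> set (leaves r)" using Node.prems(3) by auto
        obtain z \<mu>r where z: "z > 0" "\<mu>r > 0"
          "\<forall>c \<kappa>. (\<forall>ls. gd r (ereal hw) ls \<and> Qz h i z ls \<longrightarrow> \<kappa> \<le> c ls) \<longrightarrow> ennreal \<mu>r * \<kappa> \<le> mscE r (ereal hw) c"
          using Node.IH(2)[OF hl(3) dl(2) ir rnot hl(4)] hw tph by force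
        obtain \<mu>l where \<mu>l: "\<mu>l > 0" "\<forall>c \<kappa>. (\<forall>ls. gd l (ereal hw) ls \<longrightarrow> \<kappa> \<le> c ls) \<longrightarrow> ennreal \<mu>l * \<kappa> \<le> mscE l (ereal hw) c"
          using mscE_ge_mass[OF hl(1,2)] by blast
        show ?thesis
        proof (rule exI[of _ z], intro conjI exI[of _ "\<mu>l * (\<mu>r * ?E)"] allI impI)
          show "0 < z" "0 < \<mu>l * (\<mu>r * ?E)" using z \<mu>l by auto
          fix c and \<kappa> :: ennreal assume hyp: "\<forall>ls. gd ?T (ereal tp) ls \<and> Qz h i z ls \<longrightarrow> \<kappa> \<le> c ls"
          have "ennreal \<mu>l * (ennreal \<mu>r * (ennreal ?E * \<kappa>)) \<le> mscE ?T (ereal tp) c"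
            unfolding mscE.simps(2)
          proof (rule \<mu>l(2)[rule_format])
            fix ls1 assume g1: "gd l (ereal hw) ls1"
            show "ennreal \<mu>r * (ennreal ?E * \<kappa>) \<le> mscE r (ereal hw) (\<lambda>ls2. coal (length (ls1 @ ls2)) hw (ereal tp) c (ls1 @ ls2))"
            proof (rule z(3)[rule_format])
              fix ls2 assume g2: "gd r (ereal hw) ls2 \<and> Qz h i z ls2"
              show "ennreal ?E * \<kappa> \<le> coal (length (ls1 @ ls2)) hw (ereal tp) c (ls1 @ ls2)"
                using NC[OF g1 conjunct1[OF g2] Qz_append(2)[OF conjunct2[OF g2]] hyp] .
            qed
          qed
          then show "ennreal (\<mu>l * (\<mu>r * ?E)) * \<kappa> \<le> mscE ?T (ereal tp) c"
            using z \<mu>l by (simp add: ennreal_mult mult.assoc)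
        qed
      qed
    qed
  qed
qed

lemma \<nu>f_nn: "0 \<le> \<nu>f N a tp" using \<nu>f_pos less_imp_le by blast

lemma pos_up:
  assumes "heights_ok T" "distinct (leaves T)" "S' \<in> subtrees T"
    and S': "S' = Node h A (Leaf m) \<or> S' = Node h (Leaf m) A"
    and \<mu>A: "0 < \<mu>A"
    and hA: "\<forall>c \<kappa>. (\<forall>ls. gd A (ereal h) ls \<and> Qz h i z ls \<longrightarrow> \<kappa> \<le> c ls) \<longrightarrow> ennreal \<mu>A * \<kappa> \<le> mscE A (ereal h) c"
    and "ereal (ht T) < tp"
  shows "\<exists>\<mu>>0. \<forall>c \<kappa>. (\<forall>ls. gd T tp ls \<and> Qz h i z ls \<and> (tp = \<infinity> \<longrightarrow> length ls \<le> 1) \<longrightarrow> \<kappa> \<le> c ls)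
     \<longrightarrow> ennreal \<mu> * \<kappa> \<le> mscE T tp c"
  using assms(1-3,7)
proof (induction T arbitrary: tp)
  case (Leaf x) then show ?case using S' by auto
next
  case (Node hp l r)
  have hl: "heights_ok l" "ht l < hp" "heights_ok r" "ht r < hp" using Node.prems(1) by auto
  have dl: "distinct (leaves l)" "distinct (leaves r)" "set (leaves l) \<inter> set (leaves r) = {}"
    using Node.prems(2) by auto
  have htp: "ereal hp < tp" using Node.prems(4) by simp
  let ?T = "Node hp l r"
  let ?N = "length (leaves ?T)"
  let ?\<nu> = "\<nu>f ?N hp tp"
  have CQ: "ennreal ?\<nu> * \<kappa> \<le> coal (length xs) hp tp c xs"
    if "\<forall>Y\<in>set xs. hok Y \<and> ht Y \<le> hp" "mset (lvs xs) = mset (leaves ?T)" "h \<le> hp" "Qz h i z xs"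
       "\<forall>ls. gd ?T tp ls \<and> Qz h i z ls \<and> (tp = \<infinity> \<longrightarrow> length ls \<le> 1) \<longrightarrow> \<kappa> \<le> c ls"
    for xs c \<kappa>
    by (rule coal_Q[OF that(1,2) Node.prems(2) that(3) htp that(4,5)])
  show ?case
  proof (cases "S' = ?T")
    case True
    have hp: "hp = h" using True S' by auto
    have h0: "0 \<le> h" using True S' hl hp by auto
    have hle: "h \<le> hp" using hp by simp
    from S' show ?thesis
    proof
      assume "S' = Node h A (Leaf m)"
      then have lr: "l = A" "r = Leaf m" using True by auto
      show ?thesis
      proof (intro exI[of _ "\<mu>A * ?\<nu>"] conjI allI impI)
        show "0 < \<mu>A * ?\<nu>" using \<mu>A \<nu>f_pos by simp
        fix c and \<kappa> :: ennreal
        assume hyp: "\<forall>ls. gd ?T tp ls \<and> Qz h i z ls \<and> (tp = \<infinity> \<longrightarrow> length ls \<le> 1) \<longrightarrow> \<kappa> \<le> c ls"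
        have "ennreal \<mu>A * (ennreal ?\<nu> * \<kappa>) \<le> mscE ?T tp c"
          unfolding lr hp mscE.simps(2) mscE_Leaf
        proof (rule hA[rule_format], goal_cases)
          case (1 ls1)
          note g = 1
          have xs1: "\<forall>Y\<in>set (ls1 @ [Leaf m]). hok Y \<and> ht Y \<le> hp"
            using gd_ht[OF conjunct1[OF g]] h0 hp by (auto intro: less_imp_le)
          have xs2: "mset (lvs (ls1 @ [Leaf m])) = mset (leaves ?T)" using g lr by (simp add: gd_def)
          show ?case
            using CQ[OF xs1 xs2 hle Qz_append(1)[OF conjunct2[OF g]] hyp] unfolding lr hp by assumption
        qed
        then show "ennreal (\<mu>A * ?\<nu>) * \<kappa> \<le> mscE ?T tp c"
          using \<mu>A \<nu>f_nn by (simp add: ennreal_mult mult.assoc)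
      qed
    next
      assume "S' = Node h (Leaf m) A"
      then have lr: "l = Leaf m" "r = A" using True by auto
      show ?thesis
      proof (intro exI[of _ "\<mu>A * ?\<nu>"] conjI allI impI)
        show "0 < \<mu>A * ?\<nu>" using \<mu>A \<nu>f_pos by simp
        fix c and \<kappa> :: ennreal
        assume hyp: "\<forall>ls. gd ?T tp ls \<and> Qz h i z ls \<and> (tp = \<infinity> \<longrightarrow> length ls \<le> 1) \<longrightarrow> \<kappa> \<le> c ls"
        have "ennreal \<mu>A * (ennreal ?\<nu> * \<kappa>) \<le> mscE ?T tp c"
          unfolding lr hp mscE.simps(2) mscE_Leaf
        proof (rule hA[rule_format], goal_cases)
          case (1 ls1)
          note g = 1
          have xs1: "\<forall>Y\<in>set ([Leaf m] @ ls1). hok Y \<and> ht Y \<le> hp"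
            using gd_ht[OF conjunct1[OF g]] h0 hp by (auto intro: less_imp_le)
          have xs2: "mset (lvs ([Leaf m] @ ls1)) = mset (leaves ?T)" using g lr by (simp add: gd_def)
          show ?case
            using CQ[OF xs1 xs2 hle Qz_append(2)[OF conjunct2[OF g]] hyp] unfolding lr hp by assumption
        qed
        then show "ennreal (\<mu>A * ?\<nu>) * \<kappa> \<le> mscE ?T tp c"
          using \<mu>A \<nu>f_nn by (simp add: ennreal_mult mult.assoc)
      qed
    qed
  next
    case False
    then have "S' \<in> subtrees l \<or> S' \<in> subtrees r" using Node.prems(3) by auto
    then show ?thesis
    proof
      assume Sl: "S' \<in> subtrees l"
      have hhp: "h \<le> hp" using subtree_ht[OF Sl hl(1)] S' hl(2) by auto
      obtain \<mu>l where \<mu>l: "\<mu>l > 0" "\<forall>c \<kappa>. (\<forall>ls. gd l (ereal hp) ls \<and> Qz h i z ls \<and> (ereal hp = \<infinity> \<longrightarrow> length ls \<le> 1) \<longrightarrow> \<kappa> \<le> c ls)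
          \<longrightarrow> ennreal \<mu>l * \<kappa> \<le> mscE l (ereal hp) c"
        using Node.IH(1)[OF hl(1) dl(1) Sl, of "ereal hp"] hl(2) by auto
      obtain \<mu>r where \<mu>r: "\<mu>r > 0" "\<forall>c \<kappa>. (\<forall>ls. gd r (ereal hp) ls \<longrightarrow> \<kappa> \<le> c ls) \<longrightarrow> ennreal \<mu>r * \<kappa> \<le> mscE r (ereal hp) c"
        using mscE_ge_mass[OF hl(3,4)] by blast
      show ?thesis
      proof (intro exI[of _ "\<mu>l * (\<mu>r * ?\<nu>)"] conjI allI impI)
        show "0 < \<mu>l * (\<mu>r * ?\<nu>)" using \<mu>l \<mu>r \<nu>f_pos by simp
        fix c and \<kappa> :: ennreal
        assume hyp: "\<forall>ls. gd ?T tp ls \<and> Qz h i z ls \<and> (tp = \<infinity> \<longrightarrow> length ls \<le> 1) \<longrightarrow> \<kappa> \<le> c ls"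
        have "ennreal \<mu>l * (ennreal \<mu>r * (ennreal ?\<nu> * \<kappa>)) \<le> mscE ?T tp c"
          unfolding mscE.simps(2)
        proof (rule \<mu>l(2)[rule_format])
          fix ls1 assume g1: "gd l (ereal hp) ls1 \<and> Qz h i z ls1 \<and> (ereal hp = \<infinity> \<longrightarrow> length ls1 \<le> 1)"
          show "ennreal \<mu>r * (ennreal ?\<nu> * \<kappa>) \<le> mscE r (ereal hp) (\<lambda>ls2. coal (length (ls1 @ ls2)) hp tp c (ls1 @ ls2))"
          proof (rule \<mu>r(2)[rule_format])
            fix ls2 assume g2: "gd r (ereal hp) ls2"
            have xs1: "\<forall>Y\<in>set (ls1 @ ls2). hok Y \<and> ht Y \<le> hp"
              using gd_ht[OF conjunct1[OF g1]] gd_ht[OF g2] by (auto intro: less_imp_le)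
            have xs2: "mset (lvs (ls1 @ ls2)) = mset (leaves ?T)" using g1 g2 by (simp add: gd_def)
            show "ennreal ?\<nu> * \<kappa> \<le> coal (length (ls1 @ ls2)) hp tp c (ls1 @ ls2)"
              using CQ[OF xs1 xs2 hhp Qz_append(1)[OF conjunct1[OF conjunct2[OF g1]]] hyp] .
          qed
        qed
        then show "ennreal (\<mu>l * (\<mu>r * ?\<nu>)) * \<kappa> \<le> mscE ?T tp c"
          using \<mu>l \<mu>r \<nu>f_nn by (simp add: ennreal_mult mult.assoc)
      qed
    next
      assume Sr: "S' \<in> subtrees r"
      have hhp: "h \<le> hp" using subtree_ht[OF Sr hl(3)] S' hl(4) by auto
      obtain \<mu>r where \<mu>r: "\<mu>r > 0" "\<forall>c \<kappa>. (\<forall>ls. gd r (ereal hp) ls \<and> Qz h i z ls \<and> (ereal hp = \<infinity> \<longrightarrow> length ls \<le> 1) \<longrightarrow> \<kappa> \<le> c ls)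
          \<longrightarrow> ennreal \<mu>r * \<kappa> \<le> mscE r (ereal hp) c"
        using Node.IH(2)[OF hl(3) dl(2) Sr, of "ereal hp"] hl(4) by auto
      obtain \<mu>l where \<mu>l: "\<mu>l > 0" "\<forall>c \<kappa>. (\<forall>ls. gd l (ereal hp) ls \<longrightarrow> \<kappa> \<le> c ls) \<longrightarrow> ennreal \<mu>l * \<kappa> \<le> mscE l (ereal hp) c"
        using mscE_ge_mass[OF hl(1,2)] by blast
      show ?thesis
      proof (intro exI[of _ "\<mu>l * (\<mu>r * ?\<nu>)"] conjI allI impI)
        show "0 < \<mu>l * (\<mu>r * ?\<nu>)" using \<mu>l \<mu>r \<nu>f_pos by simp
        fix c and \<kappa> :: ennreal
        assume hyp: "\<forall>ls. gd ?T tp ls \<and> Qz h i z ls \<and> (tp = \<infinity> \<longrightarrow> length ls \<le> 1) \<longrightarrow> \<kappa> \<le> c ls"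
        have "ennreal \<mu>l * (ennreal \<mu>r * (ennreal ?\<nu> * \<kappa>)) \<le> mscE ?T tp c"
          unfolding mscE.simps(2)
        proof (rule \<mu>l(2)[rule_format])
          fix ls1 assume g1: "gd l (ereal hp) ls1"
          show "ennreal \<mu>r * (ennreal ?\<nu> * \<kappa>) \<le> mscE r (ereal hp) (\<lambda>ls2. coal (length (ls1 @ ls2)) hp tp c (ls1 @ ls2))"
          proof (rule \<mu>r(2)[rule_format])
            fix ls2 assume g2: "gd r (ereal hp) ls2 \<and> Qz h i z ls2 \<and> (ereal hp = \<infinity> \<longrightarrow> length ls2 \<le> 1)"
            have xs1: "\<forall>Y\<in>set (ls1 @ ls2). hok Y \<and> ht Y \<le> hp"
              using gd_ht[OF g1] gd_ht[OF conjunct1[OF g2]] by (auto intro: less_imp_le)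
            have xs2: "mset (lvs (ls1 @ ls2)) = mset (leaves ?T)" using g1 g2 by (simp add: gd_def)
            show "ennreal ?\<nu> * \<kappa> \<le> coal (length (ls1 @ ls2)) hp tp c (ls1 @ ls2)"
              using CQ[OF xs1 xs2 hhp Qz_append(2)[OF conjunct1[OF conjunct2[OF g2]]] hyp] .
          qed
        qed
        then show "ennreal (\<mu>l * (\<mu>r * ?\<nu>)) * \<kappa> \<le> mscE ?T tp c"
          using \<mu>l \<mu>r \<nu>f_nn by (simp add: ennreal_mult mult.assoc)
      qed
    qed
  qed
qed

lemma Ei_finite:
  assumes hS: "heights_ok S" and S: "S = Node hr l r"
  shows "mscE S \<infinity> (\<lambda>ls. ennreal (fp (hd ls) x)) < \<infinity>"
proof -
  let ?N = "length (leaves S)"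
  let ?K = "ennreal (hr + 2 * real ?N)"
  let ?c = "\<lambda>ls. ennreal (fp (hd ls) x)"
  have hl: "heights_ok l" "ht l < hr" "heights_ok r" "ht r < hr" using hS S by auto
  have hr0: "0 \<le> hr" using hok_ht_ge0[OF hS] S by simp
  have "mscE S \<infinity> ?c = mscE l (ereal hr) (\<lambda>ls1. mscE r (ereal hr) (\<lambda>ls2. coal (length (ls1 @ ls2)) hr \<infinity> ?c (ls1 @ ls2)))"
    using S by simp
  also have "\<dots> \<le> ?K"
  proof (rule mscE_le_const[OF hl(1,2)])
    fix ls1 assume g1: "gd l (ereal hr) ls1"
    show "mscE r (ereal hr) (\<lambda>ls2. coal (length (ls1 @ ls2)) hr \<infinity> ?c (ls1 @ ls2)) \<le> ?K"
    proof (rule mscE_le_const[OF hl(3,4)])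
      fix ls2 assume g2: "gd r (ereal hr) ls2"
      let ?I = "\<lambda>a xs. xs \<noteq> [] \<and> (\<forall>Y\<in>set xs. hok Y \<and> ht Y \<le> a) \<and> 0 \<le> a"
      have len: "length (ls1 @ ls2) \<le> ?N"
      proof -
        have "mset (lvs (ls1 @ ls2)) = mset (leaves S)" using g1 g2 S by (simp add: gd_def)
        from mset_lvs_length[OF this] show ?thesis by simp
      qed
      have "coal (length (ls1 @ ls2)) hr \<infinity> ?c (ls1 @ ls2) \<le> ennreal (hr + 2 * real (length (ls1 @ ls2)))"
      proof (rule coal_le_root[where I = ?I])
        show "?I hr (ls1 @ ls2)"
          using gd_ne[OF g1] gd_ht[OF g1] gd_ht[OF g2] hr0 by (auto intro: less_imp_le)
      next
        fix a xs and t :: real and p assume I: "?I a xs" and t: "0 < t" and p: "p \<in> pairs (length xs)"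
        have "length (merge_pair (a + t) p xs) = length xs - 1" using length_merge[OF p] .
        moreover have "2 \<le> length xs" using pairs_mem[OF p] by auto
        ultimately have "merge_pair (a + t) p xs \<noteq> []" by auto
        then show "?I (a + t) (merge_pair (a + t) p xs)" using merge_hok[of xs a t p] I t p by auto
      next
        fix a xs assume "?I a xs" then show "0 \<le> a" by simp
      next
        fix a xs assume I: "?I a xs" and l1: "length xs \<le> 1"
        then obtain Y where xs: "xs = [Y]" by (cases xs) auto
        have "fp Y x \<le> a" using I xs fp_le_ht[of Y x] by auto
        then show "?c xs \<le> ennreal a" using xs by (simp add: ennreal_leI)
      qed simp
      also have "\<dots> \<le> ?K" using len by (intro ennreal_leI) auto
      finally show "coal (length (ls1 @ ls2)) hr \<infinity> ?c (ls1 @ ls2) \<le> ?K" .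
    qed
  qed
  finally have le: "mscE S \<infinity> ?c \<le> ?K" .
  have "?K < \<infinity>" by simp
  with le show ?thesis by (rule le_less_trans)
qed

lemma part2:
  assumes st: "species_tree n S" and m3: "3 \<le> m"
    and S'mem: "Node h A (Leaf m) \<in> subtrees S \<or> Node h (Leaf m) A \<in> subtrees S"
    and A: "set (leaves A) = {1..<m}" and i: "i \<in> {1..<m}"
  shows "expected_fp S i < expected_fp S m"
proof -
  have dS: "distinct (leaves S)" and hS: "heights_ok S" using st by (auto simp: species_tree_def)
  from S'mem obtain S' where S'in: "S' \<in> subtrees S" and S': "S' = Node h A (Leaf m) \<or> S' = Node h (Leaf m) A"
    by blast
  have hS': "heights_ok S'" using subtrees_heights_ok[OF S'in hS] .
  have dS': "distinct (leaves S')" using subtrees_distinct[OF S'in dS] .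
  have hA: "heights_ok A" "ht A < h" "distinct (leaves A)" using hS' dS' S' by auto
  have iA: "i \<in> set (leaves A)" and mA: "m \<notin> set (leaves A)" using A i by auto
  have mi: "m \<noteq> i" using iA mA by auto
  have Anot: "A \<noteq> Leaf i"
  proof
    assume "A = Leaf i"
    then have e: "{1..<m} = {i}" using A by simp
    have "(1::nat) \<in> {1..<m}" "(2::nat) \<in> {1..<m}" using m3 by auto
    then have "1 = i" "2 = i" unfolding e by auto
    then show False by simp
  qed
  let ?cm = "\<lambda>ls. ennreal (fp (hd ls) m)"
  let ?ci = "\<lambda>ls. ennreal (fp (hd ls) i)"
  let ?cY = "\<lambda>ls. ennreal (Dv h i (Lof h i (hd ls)))"
  have c1: "mscE S \<infinity> (\<lambda>x. ?ci x + ?cY x) \<le> mscE S \<infinity> ?cm"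
  proof (rule mscE_couple[OF hS dS S'in S' iA mi])
    show "ereal (ht S) < \<infinity>" by simp
  next
    fix a xs ys assume R: "RelM h m i (mset (leaves S)) a xs ys" and "length xs \<le> 1 \<or> \<infinity> \<noteq> (\<infinity>::ereal)"
    then have l1: "length xs \<le> 1" by simp
    show "?ci ys + ?cY ys \<le> ?cm xs" by (rule RelM_exit[OF R l1])
  qed
  have c2: "mscE S \<infinity> ?ci + mscE S \<infinity> ?cY \<le> mscE S \<infinity> (\<lambda>x. ?ci x + ?cY x)"
    by (rule mscE_superadd)
  have c3: "0 < mscE S \<infinity> ?cY"
  proof -
    obtain z \<mu>A where z: "z > 0" "\<mu>A > 0"
      "\<forall>c \<kappa>. (\<forall>ls. gd A (ereal h) ls \<and> Qz h i z ls \<longrightarrow> \<kappa> \<le> c ls) \<longrightarrow> ennreal \<mu>A * \<kappa> \<le> mscE A (ereal h) c"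
      using pos_A[OF hA(1) hA(3) iA Anot hA(2) order_refl] by blast
    have pu: "\<exists>\<mu>>0. \<forall>c \<kappa>. (\<forall>ls. gd S \<infinity> ls \<and> Qz h i z ls \<and> (\<infinity> = (\<infinity>::ereal) \<longrightarrow> length ls \<le> 1) \<longrightarrow> \<kappa> \<le> c ls)
      \<longrightarrow> ennreal \<mu> * \<kappa> \<le> mscE S \<infinity> c"
      by (rule pos_up[OF hS dS S'in S' z(2) z(3)]) simp
    obtain \<mu> where \<mu>: "\<mu> > 0" "\<forall>c \<kappa>. (\<forall>ls. gd S \<infinity> ls \<and> Qz h i z ls \<and> (\<infinity> = (\<infinity>::ereal) \<longrightarrow> length ls \<le> 1) \<longrightarrow> \<kappa> \<le> c ls)
      \<longrightarrow> ennreal \<mu> * \<kappa> \<le> mscE S \<infinity> c"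
      using pu by blast
    have "ennreal \<mu> * ennreal z \<le> mscE S \<infinity> ?cY"
    proof (rule \<mu>(2)[rule_format])
      fix ls assume g: "gd S \<infinity> ls \<and> Qz h i z ls \<and> (\<infinity> = (\<infinity>::ereal) \<longrightarrow> length ls \<le> 1)"
      then obtain Y where ls: "ls = [Y]" using gd_ne[of S \<infinity> ls] by (cases ls) auto
      then have "z \<le> Dv h i (Lof h i Y)" using g by (auto simp: Qz_def)
      then show "ennreal z \<le> ?cY ls" using ls by (simp add: ennreal_leI)
    qed
    moreover have "0 < ennreal \<mu> * ennreal z" using \<mu> z by (simp add: ennreal_mult[symmetric])
    ultimately show ?thesis by (rule order.strict_trans2[rotated])
  qed
  have c4: "mscE S \<infinity> ?ci < \<infinity>"
  proof (cases S)
    case (Leaf x) then show ?thesis using S'in S' by auto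
  next
    case (Node hr l r) then show ?thesis using Ei_finite[OF hS] by blast
  qed
  have "mscE S \<infinity> ?ci < mscE S \<infinity> ?ci + mscE S \<infinity> ?cY"
    using c3 c4 ennreal_add_left_cancel_less[of "mscE S \<infinity> ?ci" 0 "mscE S \<infinity> ?cY"] by simp
  also have "\<dots> \<le> mscE S \<infinity> ?cm" using c1 c2 by (rule order_trans[rotated])
  finally show ?thesis unfolding expected_fp_def .
qed

theorem proposition1:
  fixes n m :: nat and S :: utree
  assumes "n \<ge> 3"
    and "species_tree n S"
    and "3 \<le> m" and "m \<le> n"
    and "\<exists>h A. (Node h A (Leaf m) \<in> subtrees S \<or> Node h (Leaf m) A \<in> subtrees S)
               \<and> set (leaves A) = {1..<m}"
  shows "(\<forall>i\<in>{1..<m}. fp S m > fp S i)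
       \<and> (\<forall>i\<in>{1..<m}. expected_fp S m > expected_fp S i)"
proof -
  obtain h A where S'mem: "Node h A (Leaf m) \<in> subtrees S \<or> Node h (Leaf m) A \<in> subtrees S"
    and A: "set (leaves A) = {1..<m}" using assms(5) by blast
  show ?thesis
  proof (intro conjI ballI)
    fix i assume i: "i \<in> {1..<m}"
    show "fp S i < fp S m" using part1[OF assms(2) assms(3) S'mem A i] .
  next
    fix i assume i: "i \<in> {1..<m}"
    show "expected_fp S i < expected_fp S m" using part2[OF assms(2) assms(3) S'mem A i] .
  qed
qed

end
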